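(* A normal mode transformation exists if and only if $\bm{\Omega}$ is positive definite.
   Context: Fix an integer $N\ge 1$, real numbers $v$ with $|v|<1$, $L>0$, $L_{\star}\ge 0$, an integer $M\ge 1$ and real coefficients $c_{1}=1,c_{2},\dots,c_{M}$. Let $F(k)=\sum_{i=1}^{M}(-1)^{i-1}c_{i}L_{\star}^{2i-2}k^{2i-1}$ and $k_{n}=n\pi/L$, and assume $F(k_{n})^{2}\neq v^{2}k_{n}^{2}$ for $n=1,\dots,N$. Put $u_{n}=\sqrt{|F(k_{n})^{2}-v^{2}k_{n}^{2}|}/k_{n}>0$, and $\varepsilon_{n}=1$ if $F(k_{n})^{2}-v^{2}k_{n}^{2}>0$, $\varepsilon_{n}=0$ otherwise. Define $N\times N$ matrices $\bm\sigma,\bm\rho,\bm\xi$ by $\sigma_{nn}=0$, $\sigma_{nm}=\dfrac{2iv\sqrt{nm}\,[1-(-1)^{n+m}]}{\pi\sqrt{u_{n}u_{m}}\,(m^{2}-n^{2})}$ for $n\neq m$, $\bm\rho=\mathrm{diag}(n u_{n}\varepsilon_{n})$, $\bm\xi=\mathrm{diag}(-n u_{n}(1-\varepsilon_{n}))$. With $\mathbf{I}$ the $N\times N$ identity, define the $2N\times 2N$ matrices $\bm{\Sigma}=\begin{pmatrix}\mathbf{I}&\mathbf{0}\\ \mathbf{0}&-\mathbf{I}\end{pmatrix}$, $\bm{\Gamma}=\begin{pmatrix}\mathbf{0}&\mathbf{I}\\ \mathbf{I}&\mathbf{0}\end{pmatrix}$, $\mathbf{R}=\bm{\Sigma}-\begin{pmatrix}\bm\sigma&\bm\sigma\\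 \bm\sigma&\bm\sigma\end{pmatrix}$, $\bm{\Omega}=\begin{pmatrix}\bm\rho&\bm\xi\\ \bm\xi&\bm\rho\end{pmatrix}$. Standing assumption: $\mathbf{R}$ is invertible. Let $\mathbf{D}=\mathbf{R}^{-1}\bm{\Omega}$. Here ${}^{*}$ denotes entrywise complex conjugation and ${}^{\mathrm{H}}$ the conjugate transpose. A normal mode transformation is a $2N\times2N$ matrix $\mathbf{T}$ such that (i) $\mathbf{T}^{\mathrm{H}}\mathbf{R}\mathbf{T}=\bm{\Sigma}$; (ii) $\mathbf{T}=\bm{\Gamma}\mathbf{T}^{*}\bm{\Gamma}$; (iii) $\mathbf{T}^{-1}\mathbf{D}\mathbf{T}=\mathrm{diag}(\mu_{1},\dots,\mu_{N},-\mu_{1},\dots,-\mu_{N})$ for some real numbers $\mu_{n}>0$, where $\mathbf{T}^{-1}=\bm{\Sigma}\mathbf{T}^{\mathrm{H}}\mathbf{R}$. *)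

theory Defs
  imports Complex_Main "Jordan_Normal_Form.Matrix"
begin

definition dispF :: "real \<Rightarrow> nat \<Rightarrow> (nat \<Rightarrow> real) \<Rightarrow> real \<Rightarrow> real" where
  "dispF Ls M c k = (\<Sum>i=1..M. (-1)^(i-1) * c i * Ls^(2*i-2) * k^(2*i-1))"

definition wavenum :: "real \<Rightarrow> nat \<Rightarrow> real" where
  "wavenum L n = real n * pi / L"

definition discr :: "real \<Rightarrow> real \<Rightarrow> real \<Rightarrow> nat \<Rightarrow> (nat \<Rightarrow> real) \<Rightarrow> nat \<Rightarrow> real" where
  "discr v L Ls M c n = (dispF Ls M c (wavenum L n))^2 - v^2 * (wavenum L n)^2"

definition uu :: "real \<Rightarrow> real \<Rightarrow> real \<Rightarrow> nat \<Rightarrow> (nat \<Rightarrow> real) \<Rightarrow> nat \<Rightarrow> real" where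
  "uu v L Ls M c n = sqrt \<bar>discr v L Ls M c n\<bar> / wavenum L n"

definition epsn :: "real \<Rightarrow> real \<Rightarrow> real \<Rightarrow> nat \<Rightarrow> (nat \<Rightarrow> real) \<Rightarrow> nat \<Rightarrow> real" where
  "epsn v L Ls M c n = (if discr v L Ls M c n > 0 then 1 else 0)"

text \<open>N x N matrices, 0-based indices i,j correspond to n = i+1, m = j+1.\<close>
definition sigmaM :: "nat \<Rightarrow> real \<Rightarrow> real \<Rightarrow> real \<Rightarrow> nat \<Rightarrow> (nat \<Rightarrow> real) \<Rightarrow> complex mat" where
  "sigmaM N v L Ls M c = mat N N (\<lambda>(i,j). let n = i+1; m = j+1 in
     if n = m then 0 else
     \<i> * complex_of_real (2 * v * sqrt (real (n*m)) * (1 - (-1)^(n+m))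
        / (pi * sqrt (uu v L Ls M c n * uu v L Ls M c m) * (real m ^ 2 - real n ^ 2))))"

definition rhoM :: "nat \<Rightarrow> real \<Rightarrow> real \<Rightarrow> real \<Rightarrow> nat \<Rightarrow> (nat \<Rightarrow> real) \<Rightarrow> real mat" where
  "rhoM N v L Ls M c = mat N N (\<lambda>(i,j). if i = j then
     real (i+1) * uu v L Ls M c (i+1) * epsn v L Ls M c (i+1) else 0)"

definition xiM :: "nat \<Rightarrow> real \<Rightarrow> real \<Rightarrow> real \<Rightarrow> nat \<Rightarrow> (nat \<Rightarrow> real) \<Rightarrow> real mat" where
  "xiM N v L Ls M c = mat N N (\<lambda>(i,j). if i = j then
     - real (i+1) * uu v L Ls M c (i+1) * (1 - epsn v L Ls M c (i+1)) else 0)"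

definition SigmaM :: "nat \<Rightarrow> complex mat" where
  "SigmaM N = four_block_mat (1\<^sub>m N) (0\<^sub>m N N) (0\<^sub>m N N) (- 1\<^sub>m N)"

definition GammaM :: "nat \<Rightarrow> complex mat" where
  "GammaM N = four_block_mat (0\<^sub>m N N) (1\<^sub>m N) (1\<^sub>m N) (0\<^sub>m N N)"

definition RM :: "nat \<Rightarrow> real \<Rightarrow> real \<Rightarrow> real \<Rightarrow> nat \<Rightarrow> (nat \<Rightarrow> real) \<Rightarrow> complex mat" where
  "RM N v L Ls M c = SigmaM N -
     four_block_mat (sigmaM N v L Ls M c) (sigmaM N v L Ls M c)
                    (sigmaM N v L Ls M c) (sigmaM N v L Ls M c)"

definition OmegaM :: "nat \<Rightarrow> real \<Rightarrow> real \<Rightarrow> real \<Rightarrow> nat \<Rightarrow> (nat \<Rightarrow> real) \<Rightarrow> real mat" where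
  "OmegaM N v L Ls M c = four_block_mat (rhoM N v L Ls M c) (xiM N v L Ls M c)
                                        (xiM N v L Ls M c) (rhoM N v L Ls M c)"

definition inv_mat :: "nat \<Rightarrow> complex mat \<Rightarrow> complex mat" where
  "inv_mat n A = (THE B. B \<in> carrier_mat n n \<and> A * B = 1\<^sub>m n \<and> B * A = 1\<^sub>m n)"

definition DM :: "nat \<Rightarrow> real \<Rightarrow> real \<Rightarrow> real \<Rightarrow> nat \<Rightarrow> (nat \<Rightarrow> real) \<Rightarrow> complex mat" where
  "DM N v L Ls M c = inv_mat (2*N) (RM N v L Ls M c) * map_mat complex_of_real (OmegaM N v L Ls M c)"

definition cconj :: "complex mat \<Rightarrow> complex mat" where
  "cconj A = map_mat cnj A"

definition adj :: "complex mat \<Rightarrow> complex mat" where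
  "adj A = transpose_mat (cconj A)"

definition normal_mode_transformation ::
  "nat \<Rightarrow> real \<Rightarrow> real \<Rightarrow> real \<Rightarrow> nat \<Rightarrow> (nat \<Rightarrow> real) \<Rightarrow> complex mat \<Rightarrow> bool" where
  "normal_mode_transformation N v L Ls M c T \<longleftrightarrow>
     (let R = RM N v L Ls M c; Tinv = SigmaM N * adj T * R in
     T \<in> carrier_mat (2*N) (2*N) \<and>
     adj T * R * T = SigmaM N \<and>
     T = GammaM N * cconj T * GammaM N \<and>
     (\<exists>\<mu> :: nat \<Rightarrow> real. (\<forall>i<N. \<mu> i > 0) \<and>
        Tinv * DM N v L Ls M c * T =
        mat_diag (2*N) (\<lambda>i. complex_of_real (if i < N then \<mu> i else - \<mu> (i - N)))))"

definition pos_def_mat :: "nat \<Rightarrow> real mat \<Rightarrow> bool" where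
  "pos_def_mat n A \<longleftrightarrow> A \<in> carrier_mat n n \<and> transpose_mat A = A \<and>
     (\<forall>x \<in> carrier_vec n. x \<noteq> 0\<^sub>v n \<longrightarrow> x \<bullet> (A *\<^sub>v x) > 0)"

end

theory Submission imports Defs "Jordan_Normal_Form.Schur_Decomposition" "HOL-Computational_Algebra.Fundamental_Theorem_Algebra" begin

lemma dim_adj[simp]: "dim_row (adj A) = dim_col A" "dim_col (adj A) = dim_row A"
  unfolding adj_def cconj_def by auto

lemma adj_carrier[simp]: "A \<in> carrier_mat n m \<Longrightarrow> adj A \<in> carrier_mat m n"
  unfolding adj_def cconj_def by auto

lemma adj_index[simp]: "i < dim_col A \<Longrightarrow> j < dim_row A \<Longrightarrow> adj A $$ (i,j) = cnj (A $$ (j,i))"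
  unfolding adj_def cconj_def by auto

lemma adj_adj[simp]: "adj (adj A) = A"
  by (rule eq_matI) auto

lemma adj_mult: assumes "A \<in> carrier_mat n k" "B \<in> carrier_mat k m"
  shows "adj (A * B) = adj B * adj A"
proof (rule eq_matI)
  fix i j assume ij: "i < dim_row (adj B * adj A)" "j < dim_col (adj B * adj A)"
  hence i: "i < m" and j: "j < n" using assms by auto
  show "adj (A * B) $$ (i, j) = (adj B * adj A) $$ (i, j)"
    using assms i j by (auto simp: scalar_prod_def intro!: sum.cong)
qed (use assms in auto)

lemma cscal_self: "v \<bullet>c v = complex_of_real (\<Sum>i<dim_vec v. (cmod (v $ i))^2)"
  unfolding scalar_prod_def
  by (simp add: complex_mult_cnj cmod_def lessThan_atLeast0)

lemma conj_sprod_entry: "A \<in> carrier_mat n m \<Longrightarrow> i < m \<Longrightarrow> j < m \<Longrightarrow>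
   (adj A * A) $$ (i,j) = col A j \<bullet>c col A i"
  by (auto simp: scalar_prod_def mult.commute intro!: sum.cong)

lemma unitary_first_col:
  fixes v :: "complex vec"
  assumes v: "v \<in> carrier_vec n" and v1: "v \<bullet>c v = 1" and n: "n > 0"
  shows "\<exists>U \<in> carrier_mat n n. adj U * U = 1\<^sub>m n \<and> col U 0 = v"
proof -
  interpret cof_vec_space n "TYPE(complex)" .
  have v0: "v \<noteq> 0\<^sub>v n" using v1 by auto
  define b where "b = basis_completion v"
  define ws where "ws = gram_schmidt n b"
  from basis_completion[OF v v0, folded b_def]
  have dist_b: "distinct b" 
    and indep: "\<not> lin_dep (set b)" and b: "set b \<subseteq> carrier_vec n" and hdb: "hd b = v" 
    and len_b: "length b = n" by auto
  from hdb len_b n obtain vs where bv: "b = v # vs" by (cases b, auto)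
  from gram_schmidt_result[OF b dist_b indep refl, folded ws_def]
  have ws: "set ws \<subseteq> carrier_vec n" "corthogonal ws" "length ws = n" 
    by (auto simp: len_b)
  from gram_schmidt_hd[OF v, of vs, folded bv] have hdws: "hd ws = v" unfolding ws_def .
  have ws0: "ws ! 0 = v" using hdws ws(3) n by (cases ws) auto
  have wsc: "\<And>j. j < n \<Longrightarrow> ws ! j \<in> carrier_vec n" using ws by auto
  define nr where "nr j = complex_of_real (sqrt (Re (ws ! j \<bullet>c ws ! j)))" for j
  have nrpos: "Re (ws ! j \<bullet>c ws ! j) > 0" and nrreal: "ws ! j \<bullet>c ws ! j = complex_of_real (Re (ws ! j \<bullet>c ws ! j))"
     if j: "j < n" for j
  proof -
    have ne: "ws ! j \<bullet>c ws ! j \<noteq> 0" using ws(2) j ws(3) unfolding corthogonal_def by auto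
    show "ws ! j \<bullet>c ws ! j = complex_of_real (Re (ws ! j \<bullet>c ws ! j))" unfolding cscal_self by simp
    have "(\<Sum>i<dim_vec (ws ! j). (cmod (ws ! j $ i))^2) \<ge> 0" by (intro sum_nonneg) auto
    moreover have "(\<Sum>i<dim_vec (ws ! j). (cmod (ws ! j $ i))^2) \<noteq> 0" using ne unfolding cscal_self by (metis of_real_0)
    ultimately show "Re (ws ! j \<bullet>c ws ! j) > 0" unfolding cscal_self by simp
  qed
  have nr0: "nr 0 = 1" unfolding nr_def ws0 v1 by simp
  have nrsq: "cnj (nr j) * nr j = ws ! j \<bullet>c ws ! j" if "j < n" for j
  proof -
    have "cnj (nr j) * nr j = complex_of_real ((sqrt (Re (ws ! j \<bullet>c ws ! j)))^2)"
      unfolding nr_def by (simp only: complex_cnj_complex_of_real of_real_power flip: power2_eq_square)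
    also have "\<dots> = ws ! j \<bullet>c ws ! j" using nrpos[OF that] nrreal[OF that] by simp
    finally show ?thesis .
  qed
  have nrne: "nr j \<noteq> 0" if "j < n" for j using nrpos[OF that] unfolding nr_def by simp
  define U where "U = mat n n (\<lambda>(i,j). ws ! j $ i / nr j)"
  have U: "U \<in> carrier_mat n n" unfolding U_def by auto
  have colU: "col U j = (1 / nr j) \<cdot>\<^sub>v ws ! j" if "j < n" for j
    using wsc[OF that] that unfolding U_def by (auto simp: col_def)
  have "adj U * U = 1\<^sub>m n"
  proof (rule eq_matI)
    fix i j assume "i < dim_row (1\<^sub>m n :: complex mat)" "j < dim_col (1\<^sub>m n :: complex mat)"
    hence i: "i < n" and j: "j < n" by auto
    have "(adj U * U) $$ (i,j) = col U j \<bullet>c col U i" using conj_sprod_entry[OF U i j] .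
    also have "\<dots> = (1 / nr j) * cnj (1 / nr i) * (ws ! j \<bullet>c ws ! i)"
      unfolding colU[OF i] colU[OF j] using wsc[OF i] wsc[OF j]
      by (simp add: scalar_prod_def sum_distrib_left algebra_simps)
    also have "\<dots> = 1\<^sub>m n $$ (i,j)"
    proof (cases "i = j")
      case True
      have c0: "cnj (nr j) \<noteq> 0" using nrne[OF j] by simp
      have "(1 / nr j) * cnj (1 / nr j) * (ws ! j \<bullet>c ws ! i) = (1 / nr j) * (1 / cnj (nr j)) * (cnj (nr j) * nr j)"
        using True nrsq[OF j] by simp
      also have "\<dots> = 1" using c0 nrne[OF j] by (simp add: field_simps)
      finally show ?thesis using True j by simp
    next
      case False
      then show ?thesis using ws(2) ws(3) i j unfolding corthogonal_def by auto
    qed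
    finally show "(adj U * U) $$ (i,j) = 1\<^sub>m n $$ (i,j)" .
  qed (use U in auto)
  moreover have "col U 0 = v" using colU[OF n] nr0 ws0 by simp
  ultimately show ?thesis using U by blast
qed


lemma adj_four_block: assumes c: "A \<in> carrier_mat nr1 nc1" "B \<in> carrier_mat nr1 nc2"
  "C \<in> carrier_mat nr2 nc1" "D \<in> carrier_mat nr2 nc2"
  shows "adj (four_block_mat A B C D) = four_block_mat (adj A) (adj C) (adj B) (adj D)"
  unfolding adj_def cconj_def
  by (subst map_four_block_mat[OF c], subst transpose_four_block_mat, use c in auto)

lemma normalize_vec:
  fixes v :: "complex vec"
  assumes "v \<in> carrier_vec n" "v \<noteq> 0\<^sub>v n"
  shows "\<exists>c. c \<noteq> 0 \<and> (c \<cdot>\<^sub>v v) \<bullet>c (c \<cdot>\<^sub>v v) = 1"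
proof -
  define r where "r = (\<Sum>i<dim_vec v. (cmod (v $ i))^2)"
  have r0: "r \<ge> 0" unfolding r_def by (intro sum_nonneg) auto
  have "r \<noteq> 0"
  proof
    assume "r = 0"
    hence "v \<bullet>c v = 0" unfolding cscal_self r_def by simp
    hence "v = 0\<^sub>v n" using assms(1) conjugate_square_eq_0_vec by blast
    thus False using assms(2) by simp
  qed
  with r0 have rp: "r > 0" by simp
  define c where "c = complex_of_real (1 / sqrt r)"
  have "(c \<cdot>\<^sub>v v) \<bullet>c (c \<cdot>\<^sub>v v) = c * cnj c * (v \<bullet>c v)"
    using assms(1) by (simp add: scalar_prod_def sum_distrib_left algebra_simps)
  also have "\<dots> = complex_of_real ((1 / sqrt r) * (1 / sqrt r) * r)"
    unfolding c_def cscal_self r_def[symmetric] complex_cnj_complex_of_real by (simp only: flip: of_real_mult)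
  also have "\<dots> = 1" using rp by (simp add: field_simps)
  finally have "(c \<cdot>\<^sub>v v) \<bullet>c (c \<cdot>\<^sub>v v) = 1" .
  moreover have "c \<noteq> 0" using rp unfolding c_def by simp
  ultimately show ?thesis by blast
qed

lemma block_diag_mult:
  fixes A1 A2 D1 D2 :: "'a::comm_ring_1 mat"
  assumes "A1 \<in> carrier_mat a a" "D1 \<in> carrier_mat b b" "A2 \<in> carrier_mat a a" "D2 \<in> carrier_mat b b"
  shows "four_block_mat A1 (0\<^sub>m a b) (0\<^sub>m b a) D1 * four_block_mat A2 (0\<^sub>m a b) (0\<^sub>m b a) D2
    = four_block_mat (A1 * A2) (0\<^sub>m a b) (0\<^sub>m b a) (D1 * D2)"
  by (subst mult_four_block_mat[OF assms(1) zero_carrier_mat zero_carrier_mat assms(2) assms(3) zero_carrier_mat zero_carrier_mat assms(4)])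
     (use assms in \<open>auto intro!: cong_four_block_mat\<close>)

lemma spectral:
  fixes A :: "complex mat"
  assumes "A \<in> carrier_mat n n" "adj A = A"
  shows "\<exists>U \<in> carrier_mat n n. adj U * U = 1\<^sub>m n \<and>
     (\<exists>d::nat\<Rightarrow>real. adj U * A * U = mat_diag n (\<lambda>i. complex_of_real (d i)))"
  using assms
proof (induction n arbitrary: A)
  case 0
  have "adj (1\<^sub>m 0) * A * 1\<^sub>m 0 = mat_diag 0 (\<lambda>i. complex_of_real 0)"
    by (rule eq_matI) (use 0 in \<open>auto simp: mat_diag_def\<close>)
  moreover have "adj (1\<^sub>m 0) * 1\<^sub>m 0 = (1\<^sub>m 0 :: complex mat)" by (rule eq_matI) auto
  ultimately show ?case by (intro bexI[of _ "1\<^sub>m 0"] conjI exI[of _ "\<lambda>_. 0"]) auto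
next
  case (Suc m)
  let ?n = "Suc m"
  have A: "A \<in> carrier_mat ?n ?n" and hA: "adj A = A" using Suc.prems by auto
  have "degree (char_poly A) = ?n" using degree_monic_char_poly[OF A] by simp
  hence "\<not> constant (poly (char_poly A))" by (simp add: constant_degree)
  then obtain e where "poly (char_poly A) e = 0" using fundamental_theorem_of_algebra by blast
  hence "eigenvalue A e" using eigenvalue_root_char_poly[OF A] by simp
  then obtain v where "eigenvector A v e" unfolding eigenvalue_def by blast
  hence v: "v \<in> carrier_vec ?n" and v0: "v \<noteq> 0\<^sub>v ?n" and Av: "A *\<^sub>v v = e \<cdot>\<^sub>v v"
    unfolding eigenvector_def using A by auto
  obtain c where c0: "c \<noteq> 0" and cn: "(c \<cdot>\<^sub>v v) \<bullet>c (c \<cdot>\<^sub>v v) = 1" using normalize_vec[OF v v0] by blast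
  define w where "w = c \<cdot>\<^sub>v v"
  have w: "w \<in> carrier_vec ?n" using v unfolding w_def by auto
  have Aw: "A *\<^sub>v w = e \<cdot>\<^sub>v w" unfolding w_def using A v Av
    by (simp add: mult_mat_vec[OF A] smult_smult_assoc mult.commute)
  obtain U0 where U0: "U0 \<in> carrier_mat ?n ?n" and U0u: "adj U0 * U0 = 1\<^sub>m ?n" and U0c: "col U0 0 = w"
    using unitary_first_col[OF w cn[folded w_def]] by blast
  define B where "B = adj U0 * A * U0"
  have B: "B \<in> carrier_mat ?n ?n" unfolding B_def using U0 A by auto
  have hB: "adj B = B" unfolding B_def using U0 A hA
    by (simp add: adj_mult[of _ ?n ?n _ ?n] assoc_mult_mat[of _ ?n ?n _ ?n _ ?n])
  have Bcol: "B $$ (i,0) = (if i = 0 then e else 0)" if i: "i < ?n" for i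
  proof -
    have "B = adj U0 * (A * U0)" unfolding B_def using U0 A by (simp add: assoc_mult_mat[of _ ?n ?n _ ?n _ ?n])
    hence "B $$ (i,0) = row (adj U0) i \<bullet> (A *\<^sub>v col U0 0)" using U0 A i by (simp add: mult_mat_vec_def)
    also have "\<dots> = e * (row (adj U0) i \<bullet> col U0 0)" unfolding U0c Aw using w U0 i by simp
    also have "row (adj U0) i \<bullet> col U0 0 = (adj U0 * U0) $$ (i,0)" using U0 i by simp
    finally show ?thesis unfolding U0u using i by simp
  qed
  have e_real: "cnj e = e"
  proof -
    have "B $$ (0,0) = adj B $$ (0,0)" using hB by simp
    thus ?thesis using Bcol[of 0] B by simp
  qed
  have Brow: "B $$ (0,j) = (if j = 0 then e else 0)" if j: "j < ?n" for j
  proof -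
    have "B $$ (0,j) = adj B $$ (0,j)" using hB by simp
    also have "\<dots> = cnj (B $$ (j,0))" using B j by simp
    finally show ?thesis using Bcol[OF j] e_real by simp
  qed
  define B3 where "B3 = mat m m (\<lambda>(i,j). B $$ (Suc i, Suc j))"
  have B3: "B3 \<in> carrier_mat m m" unfolding B3_def by simp
  have hB3: "adj B3 = B3"
  proof (rule eq_matI)
    fix i j assume "i < dim_row B3" "j < dim_col B3"
    hence i: "i < m" and j: "j < m" using B3 by auto
    have "B $$ (Suc i, Suc j) = adj B $$ (Suc i, Suc j)" using hB by simp
    also have "\<dots> = cnj (B $$ (Suc j, Suc i))" using B i j by simp
    finally show "adj B3 $$ (i,j) = B3 $$ (i,j)" unfolding B3_def using i j by simp
  qed (use B3 in auto)
  from Suc.IH[OF B3 hB3] obtain U3 d3 where U3: "U3 \<in> carrier_mat m m" and U3u: "adj U3 * U3 = 1\<^sub>m m"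
    and U3d: "adj U3 * B3 * U3 = mat_diag m (\<lambda>i. complex_of_real (d3 i))" by blast
  define B1 where "B1 = mat 1 1 (\<lambda>_. e)"
  have B1: "B1 \<in> carrier_mat 1 1" unfolding B1_def by simp
  have Bblock: "B = four_block_mat B1 (0\<^sub>m 1 m) (0\<^sub>m m 1) B3"
  proof (rule eq_matI)
    fix i j assume "i < dim_row (four_block_mat B1 (0\<^sub>m 1 m) (0\<^sub>m m 1) B3)"
      "j < dim_col (four_block_mat B1 (0\<^sub>m 1 m) (0\<^sub>m m 1) B3)"
    hence i: "i < ?n" and j: "j < ?n" using B1 B3 by auto
    show "B $$ (i,j) = four_block_mat B1 (0\<^sub>m 1 m) (0\<^sub>m m 1) B3 $$ (i,j)"
      using i j B1 B3 Bcol[OF i] Brow[OF j]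
      by (cases i; cases j) (auto simp: index_mat_four_block B1_def B3_def)
  qed (use B B1 B3 in auto)
  define V where "V = four_block_mat (1\<^sub>m 1) (0\<^sub>m 1 m) (0\<^sub>m m 1) U3"
  have V: "V \<in> carrier_mat ?n ?n" unfolding V_def using U3 by auto
  have adjV: "adj V = four_block_mat (1\<^sub>m 1) (0\<^sub>m 1 m) (0\<^sub>m m 1) (adj U3)"
    unfolding V_def
    by (subst adj_four_block[of _ 1 1 _ m _ m _]) (use U3 in \<open>auto intro!: cong_four_block_mat eq_matI\<close>)
  have Vu: "adj V * V = 1\<^sub>m ?n"
  proof -
    have "adj V * V = four_block_mat (1\<^sub>m 1 * 1\<^sub>m 1) (0\<^sub>m 1 m) (0\<^sub>m m 1) (adj U3 * U3)"
      apply (subst adjV) apply (subst V_def)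
      by (rule block_diag_mult[OF one_carrier_mat adj_carrier[OF U3] one_carrier_mat U3])
    also have "\<dots> = 1\<^sub>m ?n" unfolding U3u by (rule eq_matI) (auto simp: index_mat_four_block)
    finally show ?thesis .
  qed
  define U where "U = U0 * V"
  have U: "U \<in> carrier_mat ?n ?n" unfolding U_def using U0 V by auto
  have "adj U * U = (adj V * adj U0) * (U0 * V)" unfolding U_def by (simp only: adj_mult[OF U0 V])
  also have "\<dots> = adj V * (adj U0 * (U0 * V))" by (rule assoc_mult_mat[of _ ?n ?n]) (use U0 V in auto)
  also have "adj U0 * (U0 * V) = (adj U0 * U0) * V" by (rule assoc_mult_mat[of _ ?n ?n, symmetric]) (use U0 V in auto)
  also have "\<dots> = V" unfolding U0u using V by simp
  finally have Uu: "adj U * U = 1\<^sub>m ?n" using Vu by simp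
  have "adj U * A * U = (adj V * adj U0) * A * (U0 * V)" unfolding U_def by (simp only: adj_mult[OF U0 V])
  also have "\<dots> = adj V * (adj U0 * A * U0) * V"
  proof -
    have aU0: "adj U0 \<in> carrier_mat ?n ?n" and aV: "adj V \<in> carrier_mat ?n ?n" using U0 V by auto
    have c1: "adj U0 * A \<in> carrier_mat ?n ?n" using aU0 A by auto
    have e1: "adj V * adj U0 * A = adj V * (adj U0 * A)" by (rule assoc_mult_mat[OF aV aU0 A])
    have e2: "adj V * (adj U0 * A) * (U0 * V) = adj V * (adj U0 * A) * U0 * V"
      by (rule assoc_mult_mat[OF mult_carrier_mat[OF aV c1] U0 V, symmetric])
    have e3: "adj V * (adj U0 * A) * U0 = adj V * (adj U0 * A * U0)" by (rule assoc_mult_mat[OF aV c1 U0])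
    show ?thesis by (simp only: e1 e2 e3)
  qed
  also have "\<dots> = adj V * B * V" unfolding B_def ..
  also have "\<dots> = four_block_mat B1 (0\<^sub>m 1 m) (0\<^sub>m m 1) (adj U3 * B3 * U3)"
  proof -
    have aUB: "adj U3 * B3 \<in> carrier_mat m m" by (rule mult_carrier_mat[OF adj_carrier[OF U3] B3])
    have aUBU: "adj U3 * B3 * U3 \<in> carrier_mat m m" by (rule mult_carrier_mat[OF aUB U3])

    have "adj V * B * V = four_block_mat (1\<^sub>m 1 * B1 * 1\<^sub>m 1) (0\<^sub>m 1 m) (0\<^sub>m m 1) (adj U3 * B3 * U3)"
      apply (subst adjV) apply (subst Bblock) apply (subst V_def)
      by (simp only: block_diag_mult[OF one_carrier_mat adj_carrier[OF U3] B1 B3]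
          block_diag_mult[OF mult_carrier_mat[OF one_carrier_mat B1] aUB one_carrier_mat U3])
    also have "1\<^sub>m 1 * B1 * 1\<^sub>m 1 = B1" using B1 by simp
    finally show ?thesis .
  qed
  also have "\<dots> = mat_diag ?n (\<lambda>i. complex_of_real (if i = 0 then Re e else d3 (i - 1)))"
    unfolding U3d
  proof (rule eq_matI)
    fix i j assume "i < dim_row (mat_diag ?n (\<lambda>i. complex_of_real (if i = 0 then Re e else d3 (i - 1))))"
      "j < dim_col (mat_diag ?n (\<lambda>i. complex_of_real (if i = 0 then Re e else d3 (i - 1))))"
    hence i: "i < ?n" and j: "j < ?n" by (auto simp: mat_diag_def)
    have er: "complex_of_real (Re e) = e" using e_real by (auto simp: complex_eq_iff)
    show "four_block_mat B1 (0\<^sub>m 1 m) (0\<^sub>m m 1) (mat_diag m (\<lambda>i. complex_of_real (d3 i))) $$ (i, j) =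
         mat_diag ?n (\<lambda>i. complex_of_real (if i = 0 then Re e else d3 (i - 1))) $$ (i, j)"
      using i j er by (subst index_mat_four_block) (auto simp: B1_def mat_diag_def)
  qed (auto simp: mat_diag_def B1_def)
  finally have fin: "adj U * A * U = mat_diag ?n (\<lambda>i. complex_of_real (if i = 0 then Re e else d3 (i - 1)))" .
  have ex: "\<exists>d::nat\<Rightarrow>real. adj U * A * U = mat_diag ?n (\<lambda>i. complex_of_real (d i))"
    by (rule exI[of _ "\<lambda>i. if i = 0 then Re e else d3 (i - 1)"]) (rule fin)
  show ?case
    apply (rule bexI[of _ U]) apply (rule conjI[OF Uu ex]) by (rule U)
qed


definition tau :: "nat \<Rightarrow> nat \<Rightarrow> nat" where "tau N i = (if i < N then i + N else i - N)"
definition md :: "nat \<Rightarrow> nat \<Rightarrow> nat" where "md N i = (if i < N then i else i - N)"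
definition gam :: "nat \<Rightarrow> complex vec \<Rightarrow> complex vec" where
  "gam N x = vec (2*N) (\<lambda>i. cnj (x $ tau N i))"
definition hform :: "complex mat \<Rightarrow> complex vec \<Rightarrow> complex vec \<Rightarrow> complex" where
  "hform A x y = conjugate x \<bullet> (A *\<^sub>v y)"

lemma tau_lt: "i < 2*N \<Longrightarrow> tau N i < 2*N" unfolding tau_def by auto
lemma tau_tau: "i < 2*N \<Longrightarrow> tau N (tau N i) = i" unfolding tau_def by auto
lemma md_tau: "i < 2*N \<Longrightarrow> md N (tau N i) = md N i" unfolding tau_def md_def by auto
lemma md_lt: "i < 2*N \<Longrightarrow> md N i < N" unfolding md_def by auto
lemma tau_neq: "0 < N \<Longrightarrow> tau N i \<noteq> i" unfolding tau_def by auto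

lemma sum_tau: "(\<Sum>i\<in>{0..<2*N}. f (tau N i)) = (\<Sum>i\<in>{0..<2*N}. f i)"
proof (rule sum.reindex_bij_witness[of _ "tau N" "tau N"])
qed (auto simp: tau_tau tau_lt)

lemma gam_carrier[simp]: "gam N x \<in> carrier_vec (2*N)" unfolding gam_def by simp
lemma gam_dim[simp]: "dim_vec (gam N x) = 2*N" unfolding gam_def by simp
lemma gam_index: "i < 2*N \<Longrightarrow> gam N x $ i = cnj (x $ tau N i)" unfolding gam_def by simp

lemma gam_gam: "x \<in> carrier_vec (2*N) \<Longrightarrow> gam N (gam N x) = x"
  by (rule eq_vecI) (auto simp: gam_index tau_lt tau_tau)

lemma gam_smult: "x \<in> carrier_vec (2*N) \<Longrightarrow> gam N (k \<cdot>\<^sub>v x) = cnj k \<cdot>\<^sub>v gam N x"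
  by (rule eq_vecI) (auto simp: gam_def tau_lt)

lemma gam_sprod: assumes "x \<in> carrier_vec (2*N)" "y \<in> carrier_vec (2*N)"
  shows "conjugate (gam N x) \<bullet> gam N y = cnj (conjugate x \<bullet> y)"
proof -
  have "conjugate (gam N x) \<bullet> gam N y = (\<Sum>i\<in>{0..<2*N}. x $ tau N i * cnj (y $ tau N i))"
    unfolding scalar_prod_def using assms by (auto simp: gam_index intro!: sum.cong)
  also have "\<dots> = (\<Sum>i\<in>{0..<2*N}. x $ i * cnj (y $ i))" by (rule sum_tau)
  also have "\<dots> = cnj (conjugate x \<bullet> y)" unfolding scalar_prod_def using assms by auto
  finally show ?thesis .
qed

lemma gam_mult: assumes A: "A \<in> carrier_mat (2*N) (2*N)" and x: "x \<in> carrier_vec (2*N)"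
  and sym: "\<And>i j. i < 2*N \<Longrightarrow> j < 2*N \<Longrightarrow> A $$ (tau N i, tau N j) = complex_of_real k * cnj (A $$ (i,j))"
  shows "A *\<^sub>v gam N x = complex_of_real k \<cdot>\<^sub>v gam N (A *\<^sub>v x)"
proof (rule eq_vecI)
  fix i assume "i < dim_vec (complex_of_real k \<cdot>\<^sub>v gam N (A *\<^sub>v x))"
  hence i: "i < 2*N" by simp
  have "(A *\<^sub>v gam N x) $ i = (\<Sum>j\<in>{0..<2*N}. A $$ (i,j) * cnj (x $ tau N j))"
    using A i by (auto simp: scalar_prod_def gam_index intro!: sum.cong)
  also have "\<dots> = (\<Sum>j\<in>{0..<2*N}. A $$ (i,tau N j) * cnj (x $ tau N (tau N j)))"
    by (rule sum_tau[symmetric, where f = "\<lambda>j. A $$ (i,j) * cnj (x $ tau N j)"])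
  also have "\<dots> = (\<Sum>j\<in>{0..<2*N}. complex_of_real k * (cnj (A $$ (tau N i, j)) * cnj (x $ j)))"
  proof (rule sum.cong[OF refl])
    fix j assume "j \<in> {0..<2*N}"
    hence j: "j < 2*N" by simp
    have "A $$ (tau N (tau N i), tau N j) = complex_of_real k * cnj (A $$ (tau N i, j))"
      using sym[OF tau_lt[OF i] j] .
    thus "A $$ (i,tau N j) * cnj (x $ tau N (tau N j)) = complex_of_real k * (cnj (A $$ (tau N i, j)) * cnj (x $ j))"
      using tau_tau[OF i] tau_tau[OF j] by simp
  qed
  also have "\<dots> = (complex_of_real k \<cdot>\<^sub>v gam N (A *\<^sub>v x)) $ i"
    using A x i tau_lt[OF i] by (simp add: gam_index scalar_prod_def sum_distrib_left)
  finally show "(A *\<^sub>v gam N x) $ i = (complex_of_real k \<cdot>\<^sub>v gam N (A *\<^sub>v x)) $ i" .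
qed (use A in auto)

lemma hform_gam: assumes A: "A \<in> carrier_mat (2*N) (2*N)" and x: "x \<in> carrier_vec (2*N)" and y: "y \<in> carrier_vec (2*N)"
  and sym: "\<And>i j. i < 2*N \<Longrightarrow> j < 2*N \<Longrightarrow> A $$ (tau N i, tau N j) = complex_of_real k * cnj (A $$ (i,j))"
  shows "hform A (gam N x) (gam N y) = complex_of_real k * cnj (hform A x y)"
proof -
  have Ay: "A *\<^sub>v y \<in> carrier_vec (2*N)" using A y by simp
  have "hform A (gam N x) (gam N y) = conjugate (gam N x) \<bullet> (complex_of_real k \<cdot>\<^sub>v gam N (A *\<^sub>v y))"
    using gam_mult[OF A y sym] unfolding hform_def by simp
  also have "\<dots> = complex_of_real k * (conjugate (gam N x) \<bullet> gam N (A *\<^sub>v y))"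
    by (rule scalar_prod_smult_right) (use x in auto)
  also have "\<dots> = complex_of_real k * cnj (hform A x y)"
    unfolding hform_def gam_sprod[OF x Ay] ..
  finally show ?thesis .
qed

lemma hform_smult_right: "A \<in> carrier_mat n n \<Longrightarrow> x \<in> carrier_vec n \<Longrightarrow> y \<in> carrier_vec n \<Longrightarrow>
  hform A x (k \<cdot>\<^sub>v y) = k * hform A x y"
  unfolding hform_def by (simp add: mult_mat_vec)

lemma hform_smult_left: "A \<in> carrier_mat n n \<Longrightarrow> x \<in> carrier_vec n \<Longrightarrow> y \<in> carrier_vec n \<Longrightarrow>
  hform A (k \<cdot>\<^sub>v x) y = cnj k * hform A x y"
  unfolding hform_def by (simp add: conjugate_smult_vec)

lemma hform_herm: assumes A: "A \<in> carrier_mat n n" and h: "adj A = A"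
  and x: "x \<in> carrier_vec n" and y: "y \<in> carrier_vec n"
  shows "hform A x y = cnj (hform A y x)"
proof -
  have e: "A $$ (i,j) = cnj (A $$ (j,i))" if "i < n" "j < n" for i j
  proof -
    have "A $$ (i,j) = adj A $$ (i,j)" using h by simp
    thus ?thesis using A that by simp
  qed
  have "hform A x y = (\<Sum>i\<in>{0..<n}. cnj (x $ i) * (\<Sum>j\<in>{0..<n}. A $$ (i,j) * y $ j))"
    unfolding hform_def using A x y by (auto simp: scalar_prod_def intro!: sum.cong)
  also have "\<dots> = (\<Sum>i\<in>{0..<n}. \<Sum>j\<in>{0..<n}. cnj (x $ i) * A $$ (i,j) * y $ j)"
    by (simp add: sum_distrib_left mult.assoc)
  also have "\<dots> = (\<Sum>j\<in>{0..<n}. \<Sum>i\<in>{0..<n}. cnj (x $ i) * A $$ (i,j) * y $ j)"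
    by (rule sum.swap)
  also have "\<dots> = (\<Sum>j\<in>{0..<n}. \<Sum>i\<in>{0..<n}. cnj (x $ i) * cnj (A $$ (j,i)) * y $ j)"
    by (intro sum.cong refl, subst e) auto
  also have "\<dots> = cnj (\<Sum>j\<in>{0..<n}. cnj (y $ j) * (\<Sum>i\<in>{0..<n}. A $$ (j,i) * x $ i))"
    by (simp add: sum_distrib_left mult.commute mult.left_commute)
  also have "\<dots> = cnj (hform A y x)"
    unfolding hform_def using A x y by (auto simp: scalar_prod_def intro!: sum.cong)
  finally show ?thesis .
qed

lemma hform_entry: assumes "T \<in> carrier_mat n n" "A \<in> carrier_mat n n" "i < n" "j < n"
  shows "(adj T * A * T) $$ (i,j) = hform A (col T i) (col T j)"
  using assms unfolding hform_def
  by (simp add: assoc_mult_mat[of "adj T" n n A n T n] col_mult2 conjugate_vec_def)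
     (auto simp: scalar_prod_def intro!: sum.cong)

lemma hform_mult: assumes T: "T \<in> carrier_mat n n" and A: "A \<in> carrier_mat n n" and y: "y \<in> carrier_vec n"
  shows "hform A (T *\<^sub>v y) (T *\<^sub>v y) = hform (adj T * A * T) y y"
proof -
  have l: "conjugate (T *\<^sub>v z) \<bullet> w = conjugate z \<bullet> (adj T *\<^sub>v w)" if z: "z \<in> carrier_vec n" and w: "w \<in> carrier_vec n" for z w
  proof -
    have "conjugate (T *\<^sub>v z) \<bullet> w = (\<Sum>i\<in>{0..<n}. \<Sum>j\<in>{0..<n}. cnj (T $$ (i,j)) * cnj (z $ j) * w $ i)"
      using T z w by (simp add: scalar_prod_def sum_distrib_right)
    also have "\<dots> = (\<Sum>j\<in>{0..<n}. \<Sum>i\<in>{0..<n}. cnj (T $$ (i,j)) * cnj (z $ j) * w $ i)" by (rule sum.swap)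
    also have "\<dots> = conjugate z \<bullet> (adj T *\<^sub>v w)"
      using T z w by (simp add: scalar_prod_def sum_distrib_left mult.commute mult.left_commute)
    finally show ?thesis .
  qed
  have "hform A (T *\<^sub>v y) (T *\<^sub>v y) = conjugate y \<bullet> (adj T *\<^sub>v (A *\<^sub>v (T *\<^sub>v y)))"
    unfolding hform_def using l[OF y] A T y by simp
  also have "\<dots> = hform (adj T * A * T) y y"
  proof -
    have aT: "adj T \<in> carrier_mat n n" using T by simp
    have "(adj T * A * T) *\<^sub>v y = (adj T * A) *\<^sub>v (T *\<^sub>v y)"
      by (rule assoc_mult_mat_vec[OF mult_carrier_mat[OF aT A] T y])
    also have "\<dots> = adj T *\<^sub>v (A *\<^sub>v (T *\<^sub>v y))"
      by (rule assoc_mult_mat_vec[OF aT A mult_mat_vec_carrier[OF T y]])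
    finally show ?thesis unfolding hform_def by simp
  qed
  finally show ?thesis .
qed

lemma inv_mat_props: assumes A: "A \<in> carrier_mat n n" and inv: "invertible_mat A"
  shows "inv_mat n A \<in> carrier_mat n n \<and> A * inv_mat n A = 1\<^sub>m n \<and> inv_mat n A * A = 1\<^sub>m n"
proof -
  obtain B where AB: "inverts_mat A B" and BA: "inverts_mat B A" using inv unfolding invertible_mat_def by blast
  have AB': "A * B = 1\<^sub>m n" using AB A unfolding inverts_mat_def by simp
  have B: "B \<in> carrier_mat n n"
  proof -
    have "dim_col B = n" using arg_cong[OF AB', of dim_col] by simp
    moreover have "dim_row B = n"
    proof -
      have e: "B * A = 1\<^sub>m (dim_row B)" using BA unfolding inverts_mat_def .
      have "dim_row B = dim_col (1\<^sub>m (dim_row B) :: complex mat)" by simp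
      also have "\<dots> = dim_col (B * A)" unfolding e ..
      also have "\<dots> = n" using A by simp
      finally show ?thesis .
    qed
    ultimately show ?thesis by auto
  qed
  have BA': "B * A = 1\<^sub>m n" using mat_mult_left_right_inverse[OF A B AB'] .
  have P: "B \<in> carrier_mat n n \<and> A * B = 1\<^sub>m n \<and> B * A = 1\<^sub>m n" using B AB' BA' by blast
  have U: "C = B" if "C \<in> carrier_mat n n \<and> A * C = 1\<^sub>m n \<and> C * A = 1\<^sub>m n" for C
  proof -
    have "C = C * (A * B)" unfolding AB' using that by (metis right_mult_one_mat)
    also have "\<dots> = (C * A) * B" by (rule assoc_mult_mat[symmetric, of C n n A n B n]) (use that A B in auto)
    also have "\<dots> = B" using that B by simp
    finally show ?thesis .
  qed
  have "inv_mat n A = B" unfolding inv_mat_def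
    by (rule the_equality[where P = "\<lambda>C. C \<in> carrier_mat n n \<and> A * C = 1\<^sub>m n \<and> C * A = 1\<^sub>m n", OF P U])
  thus ?thesis using P by simp
qed


lemma Sigma_diag: "SigmaM N = mat_diag (2*N) (\<lambda>i. if i < N then 1 else -1)"
  by (rule eq_matI) (auto simp: SigmaM_def index_mat_four_block mat_diag_def)

lemma Sigma_carrier[simp]: "SigmaM N \<in> carrier_mat (2*N) (2*N)" unfolding Sigma_diag by simp

lemma Gamma_index: "i < 2*N \<Longrightarrow> j < 2*N \<Longrightarrow> GammaM N $$ (i,j) = (if j = tau N i then 1 else 0)"
  by (auto simp: GammaM_def index_mat_four_block tau_def)

lemma Gamma_carrier[simp]: "GammaM N \<in> carrier_mat (2*N) (2*N)" unfolding GammaM_def by auto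
lemma Gamma_dim[simp]: "dim_row (GammaM N) = 2*N" "dim_col (GammaM N) = 2*N" unfolding GammaM_def by auto

lemma sum_delta_tau: assumes i: "i < 2*N"
  shows "(\<Sum>k\<in>{0..<2*N}. (if k = tau N i then 1 else 0) * f k) = (f (tau N i) :: complex)"
proof -
  have "(\<Sum>k\<in>{0..<2*N}. (if k = tau N i then 1 else 0) * f k) = (\<Sum>k\<in>{0..<2*N}. if k = tau N i then f k else 0)"
    by (rule sum.cong) auto
  also have "\<dots> = f (tau N i)" using tau_lt[OF i] by (subst sum.delta) auto
  finally show ?thesis .
qed

lemma Gamma_conj: assumes X: "X \<in> carrier_mat (2*N) (2*N)"
  shows "GammaM N * X * GammaM N = mat (2*N) (2*N) (\<lambda>(i,j). X $$ (tau N i, tau N j))"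
proof (rule eq_matI)
  fix i j assume "i < dim_row (mat (2*N) (2*N) (\<lambda>(i,j). X $$ (tau N i, tau N j)))"
    "j < dim_col (mat (2*N) (2*N) (\<lambda>(i,j). X $$ (tau N i, tau N j)))"
  hence i: "i < 2*N" and j: "j < 2*N" by auto
  have GX: "(GammaM N * X) $$ (i,k) = X $$ (tau N i, k)" if k: "k < 2*N" for k
  proof -
    have "(GammaM N * X) $$ (i,k) = (\<Sum>l\<in>{0..<2*N}. GammaM N $$ (i,l) * X $$ (l,k))"
      using X i k by (simp add: scalar_prod_def)
    also have "\<dots> = (\<Sum>l\<in>{0..<2*N}. (if l = tau N i then 1 else 0) * X $$ (l,k))"
      by (rule sum.cong) (auto simp: Gamma_index[OF i])
    also have "\<dots> = X $$ (tau N i, k)" by (rule sum_delta_tau[OF i])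
    finally show ?thesis .
  qed
  have "(GammaM N * X * GammaM N) $$ (i,j) = (\<Sum>k\<in>{0..<2*N}. (GammaM N * X) $$ (i,k) * GammaM N $$ (k,j))"
    using X i j by (auto simp: scalar_prod_def)
  also have "\<dots> = (\<Sum>k\<in>{0..<2*N}. (if k = tau N j then 1 else 0) * X $$ (tau N i, k))"
  proof (rule sum.cong[OF refl])
    fix k assume "k \<in> {0..<2*N}"
    hence k: "k < 2*N" by simp
    have "(j = tau N k) = (k = tau N j)" using tau_tau[OF j] tau_tau[OF k] by auto
    thus "(GammaM N * X) $$ (i,k) * GammaM N $$ (k,j) = (if k = tau N j then 1 else 0) * X $$ (tau N i, k)"
      using GX[OF k] Gamma_index[OF k j] by simp
  qed
  also have "\<dots> = X $$ (tau N i, tau N j)" by (rule sum_delta_tau[OF j])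
  finally show "(GammaM N * X * GammaM N) $$ (i,j) = mat (2*N) (2*N) (\<lambda>(i,j). X $$ (tau N i, tau N j)) $$ (i,j)"
    using i j by simp
qed (use X in auto)

context
  fixes N M :: nat and v L Ls :: real and c :: "nat \<Rightarrow> real"
begin

abbreviation "u n \<equiv> uu v L Ls M c n"
abbreviation "ep n \<equiv> epsn v L Ls M c n"
abbreviation "sg \<equiv> sigmaM N v L Ls M c"
abbreviation "RR \<equiv> RM N v L Ls M c"
abbreviation "OM \<equiv> OmegaM N v L Ls M c"
abbreviation "rh k \<equiv> real (k+1) * u (k+1) * ep (k+1)"
abbreviation "xi k \<equiv> - real (k+1) * u (k+1) * (1 - ep (k+1))"

lemma sg_carrier[simp]: "sg \<in> carrier_mat N N" unfolding sigmaM_def by simp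
lemma sg_dim[simp]: "dim_row sg = N" "dim_col sg = N" unfolding sigmaM_def by simp_all
lemma rho_dim[simp]: "dim_row (rhoM N v L Ls M c) = N" "dim_col (rhoM N v L Ls M c) = N" unfolding rhoM_def by simp_all
lemma xi_dim[simp]: "dim_row (xiM N v L Ls M c) = N" "dim_col (xiM N v L Ls M c) = N" unfolding xiM_def by simp_all

lemma sg_props: assumes i: "i < N" and j: "j < N"
  shows "sg $$ (j,i) = - sg $$ (i,j)" "cnj (sg $$ (i,j)) = - sg $$ (i,j)"
proof -
  define X where "X n m = 2 * v * sqrt (real (n*m)) * (1 - (-1)^(n+m))
        / (pi * sqrt (uu v L Ls M c n * uu v L Ls M c m) * (real m ^ 2 - real n ^ 2))" for n m
  have e: "sg $$ (a,b) = (if a = b then 0 else \<i> * complex_of_real (X (a+1) (b+1)))" if "a < N" "b < N" for a b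
    using that unfolding sigmaM_def X_def by (simp add: Let_def)
  have X: "X m n = - X n m" for n m
  proof -
    have "X m n = 2 * v * sqrt (real (n*m)) * (1 - (-1)^(n+m))
        / (pi * sqrt (uu v L Ls M c n * uu v L Ls M c m) * (- (real m ^ 2 - real n ^ 2)))"
      unfolding X_def by (simp add: mult.commute add.commute)
    also have "\<dots> = - X n m" unfolding X_def by (simp only: mult_minus_right divide_minus_right)
    finally show ?thesis .
  qed
  show "sg $$ (j,i) = - sg $$ (i,j)" using e[OF i j] e[OF j i] X[of "i+1" "j+1"] by auto
  show "cnj (sg $$ (i,j)) = - sg $$ (i,j)" using e[OF i j] by auto
qed

lemma R_dim[simp]: "dim_row RR = 2*N" "dim_col RR = 2*N" unfolding RM_def by simp_all
lemma R_carrier[simp]: "RR \<in> carrier_mat (2*N) (2*N)" by (rule carrier_matI) simp_all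

lemma R_index: assumes "i < 2*N" "j < 2*N"
  shows "RR $$ (i,j) = (if i = j then (if i < N then 1 else -1) else 0) - sg $$ (md N i, md N j)"
proof -
  have "RR $$ (i,j) = SigmaM N $$ (i,j) - four_block_mat sg sg sg sg $$ (i,j)"
    unfolding RM_def using assms by simp
  also have "SigmaM N $$ (i,j) = (if i = j then (if i < N then 1 else -1) else 0)"
    unfolding Sigma_diag using assms by (simp add: mat_diag_def)
  also have "four_block_mat sg sg sg sg $$ (i,j) = sg $$ (md N i, md N j)"
    using assms unfolding md_def by (simp add: index_mat_four_block)
  finally show ?thesis .
qed

lemma R_herm: "adj RR = RR"
proof (rule eq_matI)
  fix i j assume "i < dim_row RR" "j < dim_col RR"
  hence i: "i < 2*N" and j: "j < 2*N" by auto
  show "adj RR $$ (i,j) = RR $$ (i,j)"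
    using i j R_index[OF i j] R_index[OF j i] sg_props[OF md_lt[OF i] md_lt[OF j]] by auto
qed auto

lemma R_gam: assumes i: "i < 2*N" and j: "j < 2*N"
  shows "RR $$ (tau N i, tau N j) = complex_of_real (-1) * cnj (RR $$ (i,j))"
proof -
  have ti: "tau N i < 2*N" and tj: "tau N j < 2*N" using tau_lt i j by auto
  have "(tau N i = tau N j) = (i = j)" using tau_tau[OF i] tau_tau[OF j] by metis
  moreover have "(tau N i < N) = (\<not> i < N)" using i unfolding tau_def by auto
  ultimately show ?thesis
    using R_index[OF ti tj] R_index[OF i j] md_tau[OF i] md_tau[OF j] sg_props(2)[OF md_lt[OF i] md_lt[OF j]]
    by auto
qed

lemma O_dim[simp]: "dim_row OM = 2*N" "dim_col OM = 2*N" unfolding OmegaM_def by simp_all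
lemma O_carrier[simp]: "OM \<in> carrier_mat (2*N) (2*N)" by (rule carrier_matI) simp_all

lemma O_index: assumes "i < 2*N" "j < 2*N"
  shows "OM $$ (i,j) = (if j = i then rh (md N i) else if j = tau N i then xi (md N i) else 0)"
  using assms unfolding OmegaM_def rhoM_def xiM_def md_def tau_def
  by (auto simp: index_mat_four_block)

abbreviation "Oc \<equiv> map_mat complex_of_real OM"

lemma Oc_carrier[simp]: "Oc \<in> carrier_mat (2*N) (2*N)" by simp

lemma O_symm: assumes "i < 2*N" "j < 2*N" shows "OM $$ (j,i) = OM $$ (i,j)"
proof -
  have "(i = tau N j) = (j = tau N i)" using tau_tau assms by metis
  thus ?thesis using O_index[OF assms] O_index[OF assms(2,1)] md_tau assms by (auto simp: tau_tau)
qed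

lemma O_transpose: "transpose_mat OM = OM"
  by (rule eq_matI) (auto simp: O_symm)

lemma Oc_herm: "adj Oc = Oc"
  by (rule eq_matI) (auto simp: O_symm)

lemma Oc_gam: assumes i: "i < 2*N" and j: "j < 2*N"
  shows "Oc $$ (tau N i, tau N j) = complex_of_real 1 * cnj (Oc $$ (i,j))"
proof -
  have ti: "tau N i < 2*N" and tj: "tau N j < 2*N" using tau_lt i j by auto
  have "(tau N j = tau N i) = (j = i)" using tau_tau[OF i] tau_tau[OF j] by metis
  moreover have "(tau N j = tau N (tau N i)) = (j = tau N i)" using tau_tau[OF i] tau_tau[OF j] by metis
  ultimately have "OM $$ (tau N i, tau N j) = OM $$ (i,j)" using O_index[OF ti tj] O_index[OF i j] md_tau[OF i] by simp
  thus ?thesis using ti tj i j by simp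
qed

lemma alg_simpl: assumes S: "S \<in> carrier_mat n n" and T: "T \<in> carrier_mat n n" and R: "R \<in> carrier_mat n n"
  and Ri: "Ri \<in> carrier_mat n n" and O: "Om \<in> carrier_mat n n" and RRi: "R * Ri = 1\<^sub>m n"
  shows "S * adj T * R * (Ri * Om) * T = S * (adj T * Om * T)"
proof -
  have aT: "adj T \<in> carrier_mat n n" using T by simp
  have SaT: "S * adj T \<in> carrier_mat n n" using S aT by simp
  have "S * adj T * R * (Ri * Om) = S * adj T * (R * (Ri * Om))"
    by (rule assoc_mult_mat[OF SaT R mult_carrier_mat[OF Ri O]])
  also have "R * (Ri * Om) = (R * Ri) * Om" by (rule assoc_mult_mat[OF R Ri O, symmetric])
  also have "\<dots> = Om" unfolding RRi using O by simp
  also have "S * adj T * Om = S * (adj T * Om)" by (rule assoc_mult_mat[OF S aT O])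
  finally have e: "S * adj T * R * (Ri * Om) = S * (adj T * Om)" .
  have "S * (adj T * Om) * T = S * (adj T * Om * T)" by (rule assoc_mult_mat[OF S mult_carrier_mat[OF aT O] T])
  thus ?thesis unfolding e .
qed

lemma Sigma_sq: "SigmaM N * SigmaM N = 1\<^sub>m (2*N)"
  unfolding Sigma_diag mat_diag_diag by (subst mat_diag_one[symmetric]) (rule arg_cong[where f = "mat_diag _"], auto)

lemma hform_diag: assumes y: "y \<in> carrier_vec n"
  shows "hform (mat_diag n (\<lambda>i. complex_of_real (f i))) y y = complex_of_real (\<Sum>i\<in>{0..<n}. f i * (cmod (y $ i))^2)"
proof -
  have "mat_diag n (\<lambda>i. complex_of_real (f i)) *\<^sub>v y = vec n (\<lambda>i. complex_of_real (f i) * y $ i)"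
  proof (rule eq_vecI)
    fix i assume "i < dim_vec (vec n (\<lambda>i. complex_of_real (f i) * y $ i))"
    hence i: "i < n" by simp
    have "(mat_diag n (\<lambda>i. complex_of_real (f i)) *\<^sub>v y) $ i = (\<Sum>j\<in>{0..<n}. (if i = j then complex_of_real (f j) else 0) * y $ j)"
      using i y by (simp add: mat_diag_def scalar_prod_def)
    also have "\<dots> = (\<Sum>j\<in>{0..<n}. if j = i then complex_of_real (f j) * y $ j else 0)"
      by (rule sum.cong) auto
    also have "\<dots> = complex_of_real (f i) * y $ i" using i by (subst sum.delta) auto
    finally show "(mat_diag n (\<lambda>i. complex_of_real (f i)) *\<^sub>v y) $ i = vec n (\<lambda>i. complex_of_real (f i) * y $ i) $ i"
      using i by simp
  qed (simp add: mat_diag_def)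
  hence "hform (mat_diag n (\<lambda>i. complex_of_real (f i))) y y = (\<Sum>i\<in>{0..<n}. cnj (y $ i) * (complex_of_real (f i) * y $ i))"
    unfolding hform_def using y by (simp add: scalar_prod_def)
  also have "\<dots> = (\<Sum>i\<in>{0..<n}. complex_of_real (f i * (cmod (y $ i))^2))"
  proof (rule sum.cong[OF refl])
    fix i
    have "cnj (y $ i) * y $ i = complex_of_real ((cmod (y $ i))^2)" using complex_norm_square[of "y $ i"] by (simp add: mult.commute)
    thus "cnj (y $ i) * (complex_of_real (f i) * y $ i) = complex_of_real (f i * (cmod (y $ i))^2)"
      by (simp add: algebra_simps)
  qed
  also have "\<dots> = complex_of_real (\<Sum>i\<in>{0..<n}. f i * (cmod (y $ i))^2)" by simp
  finally show ?thesis .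
qed

lemma hform_real: assumes x: "x \<in> carrier_vec (2*N)"
  shows "complex_of_real (x \<bullet> (OM *\<^sub>v x)) = hform Oc (map_vec complex_of_real x) (map_vec complex_of_real x)"
  unfolding hform_def using x
  by (simp add: scalar_prod_def conjugate_vec_def of_real_sum of_real_mult sum_distrib_left)

lemma partA: assumes N1: "N \<ge> 1" and inv: "invertible_mat RR"
  and nm: "normal_mode_transformation N v L Ls M c T"
  shows "pos_def_mat (2*N) OM"
proof -
  let ?n = "2*N"
  let ?S = "SigmaM N"
  have T: "T \<in> carrier_mat ?n ?n" and TRT: "adj T * RR * T = ?S"
    and ex: "\<exists>\<mu> :: nat \<Rightarrow> real. (\<forall>i<N. \<mu> i > 0) \<and>
        ?S * adj T * RR * DM N v L Ls M c * T =
        mat_diag ?n (\<lambda>i. complex_of_real (if i < N then \<mu> i else - \<mu> (i - N)))"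
    using nm unfolding normal_mode_transformation_def Let_def by auto
  obtain \<mu> :: "nat \<Rightarrow> real" where mu: "\<forall>i<N. \<mu> i > 0" and
    D: "?S * adj T * RR * DM N v L Ls M c * T = mat_diag ?n (\<lambda>i. complex_of_real (if i < N then \<mu> i else - \<mu> (i - N)))"
    using ex by blast
  from inv_mat_props[OF R_carrier inv]
  have Ri: "inv_mat ?n RR \<in> carrier_mat ?n ?n" and RRi: "RR * inv_mat ?n RR = 1\<^sub>m ?n" by auto
  have aT: "adj T \<in> carrier_mat ?n ?n" using T by simp
  have S: "?S \<in> carrier_mat ?n ?n" by simp
  define Ti where "Ti = ?S * adj T * RR"
  have Ti: "Ti \<in> carrier_mat ?n ?n" unfolding Ti_def by (rule mult_carrier_mat[OF mult_carrier_mat[OF S aT] R_carrier])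
  have "Ti * T = ?S * (adj T * RR * T)" unfolding Ti_def
    using assoc_mult_mat[OF mult_carrier_mat[OF S aT] R_carrier T] assoc_mult_mat[OF S aT R_carrier]
      assoc_mult_mat[OF S mult_carrier_mat[OF aT R_carrier] T] by simp
  hence TiT: "Ti * T = 1\<^sub>m ?n" unfolding TRT Sigma_sq .
  have TTi: "T * Ti = 1\<^sub>m ?n" by (rule mat_mult_left_right_inverse[OF Ti T TiT])
  have "?S * (adj T * Oc * T) = mat_diag ?n (\<lambda>i. complex_of_real (if i < N then \<mu> i else - \<mu> (i - N)))"
    using D unfolding DM_def by (subst alg_simpl[OF S T R_carrier Ri Oc_carrier RRi, symmetric])
  hence "?S * (?S * (adj T * Oc * T)) = ?S * mat_diag ?n (\<lambda>i. complex_of_real (if i < N then \<mu> i else - \<mu> (i - N)))"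
    by simp
  moreover have "?S * (?S * (adj T * Oc * T)) = adj T * Oc * T"
    using assoc_mult_mat[OF S S mult_carrier_mat[OF mult_carrier_mat[OF aT Oc_carrier] T]] Sigma_sq
    by (metis left_mult_one_mat mult_carrier_mat[OF mult_carrier_mat[OF aT Oc_carrier] T])
  moreover have "?S * mat_diag ?n (\<lambda>i. complex_of_real (if i < N then \<mu> i else - \<mu> (i - N)))
      = mat_diag ?n (\<lambda>i. complex_of_real (\<mu> (md N i)))"
    unfolding Sigma_diag mat_diag_diag by (rule arg_cong[where f = "mat_diag _"]) (auto simp: md_def)
  ultimately have TOT: "adj T * Oc * T = mat_diag ?n (\<lambda>i. complex_of_real (\<mu> (md N i)))" by simp
  show ?thesis unfolding pos_def_mat_def
  proof (intro conjI ballI impI)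
    show "OM \<in> carrier_mat ?n ?n" by simp
    show "transpose_mat OM = OM" by (rule O_transpose)
    fix x :: "real vec" assume x: "x \<in> carrier_vec ?n" and x0: "x \<noteq> 0\<^sub>v ?n"
    define xc where "xc = map_vec complex_of_real x"
    have xc: "xc \<in> carrier_vec ?n" unfolding xc_def using x by simp
    define y where "y = Ti *\<^sub>v xc"
    have y: "y \<in> carrier_vec ?n" unfolding y_def using Ti xc by simp
    have Ty: "T *\<^sub>v y = xc" unfolding y_def
      using assoc_mult_mat_vec[OF T Ti xc, symmetric] TTi xc by simp
    have y0: "y \<noteq> 0\<^sub>v ?n"
    proof
      assume "y = 0\<^sub>v ?n"
      moreover have "T *\<^sub>v 0\<^sub>v ?n = 0\<^sub>v ?n" using T by (intro eq_vecI) (auto simp: scalar_prod_def)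
      ultimately have "xc = 0\<^sub>v ?n" using Ty by simp
      hence "x = 0\<^sub>v ?n" unfolding xc_def using x by (auto simp: vec_eq_iff)
      thus False using x0 by simp
    qed
    have "complex_of_real (x \<bullet> (OM *\<^sub>v x)) = hform Oc (T *\<^sub>v y) (T *\<^sub>v y)"
      unfolding Ty xc_def by (rule hform_real[OF x])
    also have "\<dots> = hform (adj T * Oc * T) y y" by (rule hform_mult[OF T Oc_carrier y])
    also have "\<dots> = complex_of_real (\<Sum>i\<in>{0..<?n}. \<mu> (md N i) * (cmod (y $ i))^2)"
      unfolding TOT by (rule hform_diag[OF y])
    finally have eq: "x \<bullet> (OM *\<^sub>v x) = (\<Sum>i\<in>{0..<?n}. \<mu> (md N i) * (cmod (y $ i))^2)"
      by (simp only: of_real_eq_iff)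
    obtain k where k: "k < ?n" and yk: "y $ k \<noteq> 0" using y0 y by (auto simp: vec_eq_iff)
    have mpos: "\<mu> (md N i) > 0" if "i < ?n" for i using mu md_lt[OF that] by simp
    have "0 < \<mu> (md N k) * (cmod (y $ k))^2" using mpos[OF k] yk by simp
    also have "\<dots> \<le> (\<Sum>i\<in>{0..<?n}. \<mu> (md N i) * (cmod (y $ i))^2)"
    proof (rule member_le_sum)
      fix i assume "i \<in> {0..<?n} - {k}"
      hence "\<mu> (md N i) > 0" using mpos by simp
      thus "0 \<le> \<mu> (md N i) * (cmod (y $ i))^2" by simp
    qed (use k in auto)
    finally show "x \<bullet> (OM *\<^sub>v x) > 0" unfolding eq .
  qed
qed


lemma sum_2N: "(\<Sum>i\<in>{0..<2*N}. f i) = (\<Sum>i\<in>{0..<N}. f i + f (i + N))"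
proof -
  have "{0..<2*N} = {0..<N} \<union> {N..<2*N}" by auto
  hence "(\<Sum>i\<in>{0..<2*N}. f i) = (\<Sum>i\<in>{0..<N}. f i) + (\<Sum>i\<in>{N..<2*N}. f i)"
    by (simp add: sum.union_disjoint)
  also have "(\<Sum>i\<in>{N..<2*N}. f i) = (\<Sum>i\<in>{0..<N}. f (i + N))"
    using sum.shift_bounds_nat_ivl[of f 0 N N] by (simp add: mult_2)
  finally show ?thesis by (simp add: sum.distrib)
qed

lemma O_mult: assumes N0: "0 < N" and x: "x \<in> carrier_vec (2*N)" and i: "i < 2*N"
  shows "(OM *\<^sub>v x) $ i = rh (md N i) * x $ i + xi (md N i) * x $ tau N i"
proof -
  have "(OM *\<^sub>v x) $ i = (\<Sum>j\<in>{0..<2*N}. OM $$ (i,j) * x $ j)" using x i by (simp add: scalar_prod_def)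
  also have "\<dots> = (\<Sum>j\<in>{0..<2*N}. (if j = i then rh (md N i) * x $ j else 0) + (if j = tau N i then xi (md N i) * x $ j else 0))"
    by (rule sum.cong[OF refl]) (use i tau_neq[OF N0, of i] in \<open>auto simp: O_index\<close>)
  also have "\<dots> = rh (md N i) * x $ i + xi (md N i) * x $ tau N i"
    using i tau_lt[OF i] by (simp add: sum.distrib sum.delta)
  finally show ?thesis .
qed

lemma u_nonneg: "L > 0 \<Longrightarrow> u n \<ge> 0"
  unfolding uu_def wavenum_def by (intro divide_nonneg_nonneg) auto

lemma partB1: assumes N0: "0 < N" and Lp: "L > 0" and pd: "pos_def_mat (2*N) OM" and k: "k < N"
  shows "ep (k+1) = 1"
proof (rule ccontr)
  assume ne: "ep (k+1) \<noteq> 1"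
  hence e0: "ep (k+1) = 0" unfolding epsn_def by (auto split: if_splits)
  define x where "x = vec (2*N) (\<lambda>i. if md N i = k then (1::real) else 0)"
  have x: "x \<in> carrier_vec (2*N)" unfolding x_def by simp
  have xk: "x $ k = 1" unfolding x_def using k by (simp add: md_def)
  hence x0: "x \<noteq> 0\<^sub>v (2*N)" using k by auto
  have "x \<bullet> (OM *\<^sub>v x) = (\<Sum>i\<in>{0..<2*N}. x $ i * (rh (md N i) * x $ i + xi (md N i) * x $ tau N i))"
    unfolding scalar_prod_def using x
    apply (simp only: dim_mult_mat_vec O_dim carrier_vecD)
    apply (intro sum.cong refl) apply (subst O_mult[OF N0 x]) by auto
  also have "\<dots> = (\<Sum>i\<in>{0..<2*N}. if md N i = k then rh k + xi k else 0)"
    by (rule sum.cong[OF refl]) (auto simp: x_def tau_lt md_tau)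
  also have "\<dots> = (\<Sum>i\<in>{0..<N}. if i = k then 2 * (rh k + xi k) else 0)"
    unfolding sum_2N by (rule sum.cong[OF refl]) (auto simp: md_def)
  also have "\<dots> = 2 * (rh k + xi k)" using k by (simp add: sum.delta)
  also have "\<dots> \<le> 0" using e0 u_nonneg[OF Lp, of "k+1"] by (simp add: mult_nonpos_nonneg)
  finally have "x \<bullet> (OM *\<^sub>v x) \<le> 0" .
  moreover have "x \<bullet> (OM *\<^sub>v x) > 0" using pd x x0 unfolding pos_def_mat_def by blast
  ultimately show False by simp
qed


context
  assumes N0: "0 < N" and Lp: "L > 0"
    and hdisc: "\<forall>n\<in>{1..N}. (dispF Ls M c (wavenum L n))^2 \<noteq> v^2 * (wavenum L n)^2"
    and Rinv: "invertible_mat RR" and allep: "\<forall>k<N. ep (k+1) = 1"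
begin

abbreviation "aa k \<equiv> real (k+1) * u (k+1)"
abbreviation "ss i \<equiv> sqrt (aa (md N i))"
abbreviation "KK \<equiv> mat (2*N) (2*N) (\<lambda>(i,j). RR $$ (i,j) / complex_of_real (ss i * ss j))"

lemma u_pos: assumes "1 \<le> n" "n \<le> N" shows "u n > 0"
proof -
  have w: "wavenum L n > 0" unfolding wavenum_def using assms Lp by simp
  have "discr v L Ls M c n \<noteq> 0" using hdisc assms unfolding discr_def by auto
  hence "sqrt \<bar>discr v L Ls M c n\<bar> > 0" by simp
  thus ?thesis unfolding uu_def using w by simp
qed

lemma aa_pos: "k < N \<Longrightarrow> aa k > 0" using u_pos[of "k+1"] by simp

lemma ss_pos: "i < 2*N \<Longrightarrow> ss i > 0" using aa_pos[OF md_lt] by simp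

lemma css_ne: assumes i: "i < 2*N" shows "complex_of_real (ss i) \<noteq> 0"
proof -
  have "ss i \<noteq> 0" using ss_pos[OF i] by linarith
  thus ?thesis unfolding of_real_eq_0_iff .
qed

lemma ss_sq: assumes i: "i < 2*N" shows "ss i * ss i = aa (md N i)"
proof -
  have p: "0 < aa (md N i)" by (rule aa_pos[OF md_lt[OF i]])
  show ?thesis by (simp only: real_sqrt_mult_self abs_of_pos[OF p])
qed

lemma Oc_mult: assumes y: "y \<in> carrier_vec (2*N)"
  shows "Oc *\<^sub>v y = vec (2*N) (\<lambda>i. complex_of_real (aa (md N i)) * y $ i)"
proof (rule eq_vecI)
  fix i assume "i < dim_vec (vec (2*N) (\<lambda>i. complex_of_real (aa (md N i)) * y $ i))"
  hence i: "i < 2*N" by simp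
  have "(Oc *\<^sub>v y) $ i = (\<Sum>j\<in>{0..<2*N}. complex_of_real (OM $$ (i,j)) * y $ j)"
    using i y by (simp add: scalar_prod_def)
  also have "\<dots> = (\<Sum>j\<in>{0..<2*N}. if j = i then complex_of_real (aa (md N i)) * y $ j else 0)"
    by (rule sum.cong[OF refl]) (use i allep md_lt[OF i] in \<open>auto simp: O_index\<close>)
  also have "\<dots> = complex_of_real (aa (md N i)) * y $ i" using i by (simp add: sum.delta)
  finally show "(Oc *\<^sub>v y) $ i = vec (2*N) (\<lambda>i. complex_of_real (aa (md N i)) * y $ i) $ i" using i by simp
qed (use y in simp)

lemma K_carrier[simp]: "KK \<in> carrier_mat (2*N) (2*N)" by simp

lemma K_herm: "adj KK = KK"
proof (rule eq_matI)
  fix i j assume "i < dim_row KK" "j < dim_col KK"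
  hence i: "i < 2*N" and j: "j < 2*N" by auto
  have "RR $$ (j,i) = cnj (RR $$ (i,j))"
  proof -
    have "RR $$ (j,i) = adj RR $$ (j,i)" using R_herm by simp
    thus ?thesis using i j by simp
  qed
  thus "adj KK $$ (i,j) = KK $$ (i,j)" using i j by (simp add: mult.commute)
qed auto

lemma exists_y: "\<exists>y d. (\<forall>j<2*N. y j \<in> carrier_vec (2*N) \<and> d j \<noteq> 0 \<and>
     RR *\<^sub>v y j = complex_of_real (d j) \<cdot>\<^sub>v (Oc *\<^sub>v y j)) \<and>
     (\<forall>j<2*N. \<forall>l<2*N. hform Oc (y j) (y l) = (if j = l then 1 else 0))"
proof -
  let ?n = "2*N"
  obtain U where U: "U \<in> carrier_mat ?n ?n" and Uu: "adj U * U = 1\<^sub>m ?n"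
    and dex: "\<exists>d::nat\<Rightarrow>real. adj U * KK * U = mat_diag ?n (\<lambda>i. complex_of_real (d i))"
    using spectral[OF K_carrier K_herm] by blast
  obtain d :: "nat \<Rightarrow> real" where UKU: "adj U * KK * U = mat_diag ?n (\<lambda>i. complex_of_real (d i))" using dex by blast
  have aU: "adj U \<in> carrier_mat ?n ?n" using U by simp
  have UUa: "U * adj U = 1\<^sub>m ?n" by (rule mat_mult_left_right_inverse[OF aU U Uu])
  define D where "D = mat_diag ?n (\<lambda>i. complex_of_real (d i))"
  have "U * D = U * (adj U * KK * U)" unfolding D_def UKU ..
  also have "\<dots> = U * (adj U * (KK * U))" using assoc_mult_mat[OF aU K_carrier U] by simp
  also have "\<dots> = (U * adj U) * (KK * U)" using assoc_mult_mat[OF U aU mult_carrier_mat[OF K_carrier U]] by simp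
  also have "\<dots> = KK * U" unfolding UUa using mult_carrier_mat[OF K_carrier U] by simp
  finally have KU: "KK * U = U * D" by simp
  have eig: "KK *\<^sub>v col U j = complex_of_real (d j) \<cdot>\<^sub>v col U j" if j: "j < ?n" for j
  proof -
    have "KK *\<^sub>v col U j = col (KK * U) j" using col_mult2[OF K_carrier U j] by simp
    also have "\<dots> = col (U * D) j" unfolding KU ..
    also have "\<dots> = complex_of_real (d j) \<cdot>\<^sub>v col U j"
      unfolding D_def mat_diag_mult_right[OF U] using U j by (auto simp: col_def)
    finally show ?thesis .
  qed
  have orth: "conjugate (col U j) \<bullet> col U l = (if j = l then 1 else 0)" if j: "j < ?n" and l: "l < ?n" for j l
  proof -
    have "conjugate (col U j) \<bullet> col U l = col U l \<bullet>c col U j"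
      using U j l by (simp add: comm_scalar_prod[of _ ?n])
    also have "\<dots> = (adj U * U) $$ (j,l)" using conj_sprod_entry[OF U j l] by simp
    finally show ?thesis unfolding Uu using j l by simp
  qed
  define y where "y j = vec ?n (\<lambda>i. col U j $ i / complex_of_real (ss i))" for j
  have y: "y j \<in> carrier_vec ?n" for j unfolding y_def by simp
  have Ry: "RR *\<^sub>v y j = complex_of_real (d j) \<cdot>\<^sub>v (Oc *\<^sub>v y j)" if j: "j < ?n" for j
  proof (rule eq_vecI)
    fix i assume "i < dim_vec (complex_of_real (d j) \<cdot>\<^sub>v (Oc *\<^sub>v y j))"
    hence i: "i < ?n" by simp
    have si: "complex_of_real (ss i) \<noteq> 0" by (rule css_ne[OF i])
    have "(RR *\<^sub>v y j) $ i = (\<Sum>l\<in>{0..<?n}. RR $$ (i,l) * (col U j $ l / complex_of_real (ss l)))"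
      using i unfolding y_def by (simp add: scalar_prod_def)
    also have "\<dots> = (\<Sum>l\<in>{0..<?n}. complex_of_real (ss i) * (KK $$ (i,l) * col U j $ l))"
    proof (rule sum.cong[OF refl])
      fix l assume "l \<in> {0..<?n}"
      hence l: "l < ?n" by simp
      have sl: "complex_of_real (ss l) \<noteq> 0" by (rule css_ne[OF l])
      show "RR $$ (i,l) * (col U j $ l / complex_of_real (ss l)) = complex_of_real (ss i) * (KK $$ (i,l) * col U j $ l)"
        using i l si sl by (simp add: field_simps)
    qed
    also have "\<dots> = complex_of_real (ss i) * (KK *\<^sub>v col U j) $ i"
      using i U by (simp add: scalar_prod_def sum_distrib_left)
    also have "\<dots> = complex_of_real (ss i) * (complex_of_real (d j) * col U j $ i)"
      unfolding eig[OF j] using i U by simp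
    also have "\<dots> = (complex_of_real (d j) \<cdot>\<^sub>v (Oc *\<^sub>v y j)) $ i"
    proof -
      have "(complex_of_real (d j) \<cdot>\<^sub>v (Oc *\<^sub>v y j)) $ i = complex_of_real (d j) * (complex_of_real (aa (md N i)) * (col U j $ i / complex_of_real (ss i)))"
        unfolding Oc_mult[OF y] using i unfolding y_def by simp
      also have "complex_of_real (aa (md N i)) = complex_of_real (ss i) * complex_of_real (ss i)"
        using ss_sq[OF i] by (metis of_real_mult)
      finally show ?thesis using si by (simp add: field_simps)
    qed
    finally show "(RR *\<^sub>v y j) $ i = (complex_of_real (d j) \<cdot>\<^sub>v (Oc *\<^sub>v y j)) $ i" .
  qed (simp)
  have hy: "hform Oc (y j) (y l) = (if j = l then 1 else 0)" if j: "j < ?n" and l: "l < ?n" for j l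
  proof -
    have "hform Oc (y j) (y l) = (\<Sum>i\<in>{0..<?n}. cnj (col U j $ i / complex_of_real (ss i)) *
        (complex_of_real (aa (md N i)) * (col U l $ i / complex_of_real (ss i))))"
      unfolding hform_def Oc_mult[OF y] by (simp add: scalar_prod_def y_def)
    also have "\<dots> = (\<Sum>i\<in>{0..<?n}. cnj (col U j $ i) * col U l $ i)"
    proof (rule sum.cong[OF refl])
      fix i assume "i \<in> {0..<?n}"
      hence i: "i < ?n" by simp
      have si: "complex_of_real (ss i) \<noteq> 0" by (rule css_ne[OF i])
      have "complex_of_real (aa (md N i)) = complex_of_real (ss i) * complex_of_real (ss i)"
        using ss_sq[OF i] by (metis of_real_mult)
      thus "cnj (col U j $ i / complex_of_real (ss i)) * (complex_of_real (aa (md N i)) * (col U l $ i / complex_of_real (ss i)))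
          = cnj (col U j $ i) * col U l $ i"
        using si by (simp add: field_simps)
    qed
    also have "\<dots> = conjugate (col U j) \<bullet> col U l" using U j l by (simp add: scalar_prod_def)
    finally show ?thesis using orth[OF j l] by simp
  qed
  from inv_mat_props[OF R_carrier Rinv]
  have Ri: "inv_mat ?n RR \<in> carrier_mat ?n ?n" and RiR: "inv_mat ?n RR * RR = 1\<^sub>m ?n" by auto
  have d0: "d j \<noteq> 0" if j: "j < ?n" for j
  proof
    assume "d j = 0"
    hence "RR *\<^sub>v y j = 0\<^sub>v ?n" using Ry[OF j] by (auto simp: vec_eq_iff)
    hence "inv_mat ?n RR *\<^sub>v (RR *\<^sub>v y j) = 0\<^sub>v ?n" using Ri by (intro eq_vecI) (auto simp: scalar_prod_def)
    hence "y j = 0\<^sub>v ?n" using assoc_mult_mat_vec[OF Ri R_carrier y, symmetric] RiR y by simp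
    hence "hform Oc (y j) (y j) = 0" unfolding hform_def by (simp add: scalar_prod_def)
    thus False using hy[OF j j] by simp
  qed
  show ?thesis using y d0 Ry hy by blast
qed


lemma exists_inj: assumes "finite S" "n \<le> card S"
  shows "\<exists>p. inj_on p {0..<n} \<and> p ` {0..<n} \<subseteq> S"
proof -
  obtain T where T: "T \<subseteq> S" "card T = n" "finite T" using obtain_subset_with_card_n[OF assms(2)] by blast
  obtain h where "bij_betw h {0..<card T} T" using ex_bij_betw_nat_finite[OF T(3)] by blast
  thus ?thesis using T unfolding bij_betw_def by blast
qed

lemma exists_z: "\<exists>z lam. (\<forall>k<N. z k \<in> carrier_vec (2*N) \<and> lam k > 0 \<and>
     RR *\<^sub>v z k = complex_of_real (lam k) \<cdot>\<^sub>v (Oc *\<^sub>v z k)) \<and>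
     (\<forall>k<N. \<forall>l<N. hform Oc (z k) (z l) = (if k = l then 1 else 0))"
proof -
  let ?n = "2*N"
  obtain y d where yd: "\<forall>j<?n. y j \<in> carrier_vec ?n \<and> d j \<noteq> 0 \<and>
     RR *\<^sub>v y j = complex_of_real (d j) \<cdot>\<^sub>v (Oc *\<^sub>v y j)"
    and hy: "\<forall>j<?n. \<forall>l<?n. hform Oc (y j) (y l) = (if j = l then 1 else 0)"
    using exists_y by blast
  define P where "P = {j \<in> {0..<?n}. d j > 0}"
  define Q where "Q = {j \<in> {0..<?n}. d j < 0}"
  have PQ: "P \<union> Q = {0..<?n}" "P \<inter> Q = {}" using yd unfolding P_def Q_def by (auto simp: linorder_neq_iff)
  have fin: "finite P" "finite Q" unfolding P_def Q_def by auto
  have "card P + card Q = ?n" using card_Un_disjoint[OF fin PQ(2)] PQ(1) by simp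
  hence "N \<le> card P \<or> N \<le> card Q" by linarith
  thus ?thesis
  proof
    assume "N \<le> card P"
    then obtain p where inj: "inj_on p {0..<N}" and pP: "p ` {0..<N} \<subseteq> P" using exists_inj[OF fin(1)] by blast
    have pk: "p k < ?n \<and> d (p k) > 0" if "k < N" for k
    proof -
      have "p k \<in> P" using pP that by auto
      thus ?thesis unfolding P_def by auto
    qed
    show ?thesis
    proof (intro exI[of _ "\<lambda>k. y (p k)"] exI[of _ "\<lambda>k. d (p k)"] conjI allI impI)
      fix k assume k: "k < N"
      show "y (p k) \<in> carrier_vec ?n" "d (p k) > 0" "RR *\<^sub>v y (p k) = complex_of_real (d (p k)) \<cdot>\<^sub>v (Oc *\<^sub>v y (p k))"
        using yd pk[OF k] by auto
      fix l assume l: "l < N"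
      have "(p k = p l) = (k = l)" using inj k l unfolding inj_on_def by auto
      thus "hform Oc (y (p k)) (y (p l)) = (if k = l then 1 else 0)" using hy pk[OF k] pk[OF l] by auto
    qed
  next
    assume "N \<le> card Q"
    then obtain q where inj: "inj_on q {0..<N}" and qQ: "q ` {0..<N} \<subseteq> Q" using exists_inj[OF fin(2)] by blast
    have qk: "q k < ?n \<and> d (q k) < 0" if "k < N" for k
    proof -
      have "q k \<in> Q" using qQ that by auto
      thus ?thesis unfolding Q_def by auto
    qed
    have Rg: "RR *\<^sub>v gam N (y j) = complex_of_real (- d j) \<cdot>\<^sub>v (Oc *\<^sub>v gam N (y j))" if j: "j < ?n" for j
    proof -
      have yj: "y j \<in> carrier_vec ?n" using yd j by auto
      have "RR *\<^sub>v gam N (y j) = complex_of_real (-1) \<cdot>\<^sub>v gam N (RR *\<^sub>v y j)"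
        by (rule gam_mult[OF R_carrier yj R_gam])
      also have "RR *\<^sub>v y j = complex_of_real (d j) \<cdot>\<^sub>v (Oc *\<^sub>v y j)" using yd j by auto
      also have "gam N (complex_of_real (d j) \<cdot>\<^sub>v (Oc *\<^sub>v y j)) = complex_of_real (d j) \<cdot>\<^sub>v gam N (Oc *\<^sub>v y j)"
        using gam_smult[OF mult_mat_vec_carrier[OF Oc_carrier yj], of "complex_of_real (d j)"] by simp
      also have "gam N (Oc *\<^sub>v y j) = complex_of_real 1 \<cdot>\<^sub>v (Oc *\<^sub>v gam N (y j))"
      proof -
        have "Oc *\<^sub>v gam N (y j) = complex_of_real 1 \<cdot>\<^sub>v gam N (Oc *\<^sub>v y j)"
          by (rule gam_mult[OF Oc_carrier yj Oc_gam])
        thus ?thesis by simp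
      qed
      finally show ?thesis by (simp add: smult_smult_assoc)
    qed
    have hg: "hform Oc (gam N (y j)) (gam N (y l)) = (if j = l then 1 else 0)" if j: "j < ?n" and l: "l < ?n" for j l
    proof -
      have "hform Oc (gam N (y j)) (gam N (y l)) = complex_of_real 1 * cnj (hform Oc (y j) (y l))"
        by (rule hform_gam[OF Oc_carrier _ _ Oc_gam]) (use yd j l in auto)
      thus ?thesis using hy j l by simp
    qed
    show ?thesis
    proof (intro exI[of _ "\<lambda>k. gam N (y (q k))"] exI[of _ "\<lambda>k. - d (q k)"] conjI allI impI)
      fix k assume k: "k < N"
      show "gam N (y (q k)) \<in> carrier_vec ?n" "- d (q k) > 0"
        "RR *\<^sub>v gam N (y (q k)) = complex_of_real (- d (q k)) \<cdot>\<^sub>v (Oc *\<^sub>v gam N (y (q k)))"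
        using qk[OF k] Rg by auto
      fix l assume l: "l < N"
      have "(q k = q l) = (k = l)" using inj k l unfolding inj_on_def by auto
      thus "hform Oc (gam N (y (q k))) (gam N (y (q l))) = (if k = l then 1 else 0)" using hg qk[OF k] qk[OF l] by auto
    qed
  qed
qed


lemma hform_eig: assumes x: "x \<in> carrier_vec (2*N)" and y: "y \<in> carrier_vec (2*N)"
  and e: "RR *\<^sub>v y = complex_of_real m \<cdot>\<^sub>v (Oc *\<^sub>v y)"
  shows "hform RR x y = complex_of_real m * hform Oc x y"
  unfolding hform_def e
  by (rule scalar_prod_smult_right) (use x y in auto)

lemma gam_eig: assumes y: "y \<in> carrier_vec (2*N)"
  and e: "RR *\<^sub>v y = complex_of_real m \<cdot>\<^sub>v (Oc *\<^sub>v y)"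
  shows "RR *\<^sub>v gam N y = complex_of_real (- m) \<cdot>\<^sub>v (Oc *\<^sub>v gam N y)"
proof -
  have "RR *\<^sub>v gam N y = complex_of_real (-1) \<cdot>\<^sub>v gam N (RR *\<^sub>v y)"
    by (rule gam_mult[OF R_carrier y R_gam])
  also have "RR *\<^sub>v y = complex_of_real m \<cdot>\<^sub>v (Oc *\<^sub>v y)" by (rule e)
  also have "gam N (complex_of_real m \<cdot>\<^sub>v (Oc *\<^sub>v y)) = complex_of_real m \<cdot>\<^sub>v gam N (Oc *\<^sub>v y)"
    using gam_smult[OF mult_mat_vec_carrier[OF Oc_carrier y], of "complex_of_real m"] by simp
  also have "gam N (Oc *\<^sub>v y) = complex_of_real 1 \<cdot>\<^sub>v (Oc *\<^sub>v gam N y)"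
  proof -
    have "Oc *\<^sub>v gam N y = complex_of_real 1 \<cdot>\<^sub>v gam N (Oc *\<^sub>v y)"
      by (rule gam_mult[OF Oc_carrier y Oc_gam])
    thus ?thesis by simp
  qed
  finally show ?thesis by (simp add: smult_smult_assoc)
qed

lemma exists_T: "\<exists>T. normal_mode_transformation N v L Ls M c T"
proof -
  let ?n = "2*N"
  obtain z lam where zl: "\<forall>k<N. z k \<in> carrier_vec ?n \<and> lam k > 0 \<and>
     RR *\<^sub>v z k = complex_of_real (lam k) \<cdot>\<^sub>v (Oc *\<^sub>v z k)"
    and hz: "\<forall>k<N. \<forall>l<N. hform Oc (z k) (z l) = (if k = l then 1 else 0)"
    using exists_z by blast
  define t where "t k = complex_of_real (1 / sqrt (lam k)) \<cdot>\<^sub>v z k" for k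
  define tt where "tt j = (if j < N then t j else gam N (t (j - N)))" for j
  define T where "T = mat ?n ?n (\<lambda>(i,j). tt j $ i)"
  have lp: "lam k > 0" if "k < N" for k using zl that by auto
  have zc: "z k \<in> carrier_vec ?n" if "k < N" for k using zl that by auto
  have tc: "t k \<in> carrier_vec ?n" if "k < N" for k using zc[OF that] unfolding t_def by simp
  have ttc: "tt j \<in> carrier_vec ?n" if "j < ?n" for j using tc that unfolding tt_def by auto
  have Rt: "RR *\<^sub>v t k = complex_of_real (lam k) \<cdot>\<^sub>v (Oc *\<^sub>v t k)" if k: "k < N" for k
  proof -
    have "RR *\<^sub>v t k = complex_of_real (1 / sqrt (lam k)) \<cdot>\<^sub>v (RR *\<^sub>v z k)"
      unfolding t_def by (rule mult_mat_vec[OF R_carrier zc[OF k]])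
    also have "\<dots> = complex_of_real (lam k) \<cdot>\<^sub>v (Oc *\<^sub>v t k)"
      unfolding t_def using zl k mult_mat_vec[OF Oc_carrier zc[OF k]] by (simp add: smult_smult_assoc mult.commute)
    finally show ?thesis .
  qed
  have Rgt: "RR *\<^sub>v gam N (t k) = complex_of_real (- lam k) \<cdot>\<^sub>v (Oc *\<^sub>v gam N (t k))" if k: "k < N" for k
    by (rule gam_eig[OF tc[OF k] Rt[OF k]])
  have hOt: "hform Oc (t k) (t l) = (if k = l then complex_of_real (1 / lam k) else 0)" if k: "k < N" and l: "l < N" for k l
  proof -
    have "hform Oc (t k) (t l) = cnj (complex_of_real (1 / sqrt (lam k))) * (complex_of_real (1 / sqrt (lam l)) * hform Oc (z k) (z l))"
      unfolding t_def
      using hform_smult_left[OF Oc_carrier zc[OF k] smult_carrier_vec[THEN iffD2, OF zc[OF l]]]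
        hform_smult_right[OF Oc_carrier zc[OF k] zc[OF l]] by simp
    also have "\<dots> = (if k = l then complex_of_real (1 / lam k) else 0)"
    proof (cases "k = l")
      case True
      have "complex_of_real (1 / sqrt (lam k)) * complex_of_real (1 / sqrt (lam k)) = complex_of_real (1 / lam k)"
        using lp[OF k] by (simp flip: of_real_mult)
      then show ?thesis using True hz k by simp
    next
      case False
      then show ?thesis using hz k l by simp
    qed
    finally show ?thesis .
  qed
  have hRt: "hform RR (t k) (t l) = (if k = l then 1 else 0)" if k: "k < N" and l: "l < N" for k l
  proof -
    have "hform RR (t k) (t l) = complex_of_real (lam l) * hform Oc (t k) (t l)"
      by (rule hform_eig[OF tc[OF k] tc[OF l] Rt[OF l]])
    also have "\<dots> = (if k = l then 1 else 0)" unfolding hOt[OF k l] using lp[OF l]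
      by (simp flip: of_real_mult)
    finally show ?thesis .
  qed
  have crossO: "hform Oc (t k) (gam N (t l)) = 0" and crossR: "hform RR (t k) (gam N (t l)) = 0"
    if k: "k < N" and l: "l < N" for k l
  proof -
    let ?g = "gam N (t l)"
    have g: "?g \<in> carrier_vec ?n" by simp
    have a1: "hform RR (t k) ?g = complex_of_real (- lam l) * hform Oc (t k) ?g"
      by (rule hform_eig[OF tc[OF k] g Rgt[OF l]])
    have "hform RR (t k) ?g = cnj (hform RR ?g (t k))" by (rule hform_herm[OF R_carrier R_herm tc[OF k] g])
    also have "hform RR ?g (t k) = complex_of_real (lam k) * hform Oc ?g (t k)"
      by (rule hform_eig[OF g tc[OF k] Rt[OF k]])
    also have "hform Oc ?g (t k) = cnj (hform Oc (t k) ?g)" by (rule hform_herm[OF Oc_carrier Oc_herm g tc[OF k]])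
    finally have a2: "hform RR (t k) ?g = complex_of_real (lam k) * hform Oc (t k) ?g" by simp
    have "complex_of_real (lam k + lam l) * hform Oc (t k) ?g = 0" using a1 a2 by (simp add: algebra_simps)
    moreover have "complex_of_real (lam k + lam l) \<noteq> 0" using lp[OF k] lp[OF l]
      by (metis add_pos_pos less_irrefl of_real_eq_0_iff)
    ultimately show O0: "hform Oc (t k) ?g = 0" by simp
    show "hform RR (t k) ?g = 0" using a1 O0 by simp
  qed
  have ggR: "hform RR (gam N (t k)) (gam N (t l)) = (if k = l then -1 else 0)" if k: "k < N" and l: "l < N" for k l
  proof -
    have "hform RR (gam N (t k)) (gam N (t l)) = complex_of_real (-1) * cnj (hform RR (t k) (t l))"
      by (rule hform_gam[OF R_carrier tc[OF k] tc[OF l] R_gam])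
    thus ?thesis using hRt[OF k l] by simp
  qed
  have ggO: "hform Oc (gam N (t k)) (gam N (t l)) = (if k = l then complex_of_real (1 / lam k) else 0)" if k: "k < N" and l: "l < N" for k l
  proof -
    have "hform Oc (gam N (t k)) (gam N (t l)) = complex_of_real 1 * cnj (hform Oc (t k) (t l))"
      by (rule hform_gam[OF Oc_carrier tc[OF k] tc[OF l] Oc_gam])
    thus ?thesis using hOt[OF k l] by simp
  qed
  have HR: "hform RR (tt i) (tt j) = (if i = j then (if i < N then 1 else -1) else 0)" if i: "i < ?n" and j: "j < ?n" for i j
  proof (cases "i < N"; cases "j < N")
    assume "i < N" "j < N" thus ?thesis using hRt unfolding tt_def by simp
  next
    assume a: "i < N" "\<not> j < N" thus ?thesis using crossR[of i "j - N"] j unfolding tt_def by auto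
  next
    assume a: "\<not> i < N" "j < N"
    have "hform RR (tt i) (tt j) = cnj (hform RR (tt j) (tt i))" by (rule hform_herm[OF R_carrier R_herm ttc[OF i] ttc[OF j]])
    thus ?thesis using crossR[of j "i - N"] a i unfolding tt_def by auto
  next
    assume a: "\<not> i < N" "\<not> j < N"
    have "(i - N = j - N) = (i = j)" using a by auto
    thus ?thesis using ggR[of "i - N" "j - N"] a i j unfolding tt_def by auto
  qed
  have HO: "hform Oc (tt i) (tt j) = (if i = j then complex_of_real (1 / lam (md N i)) else 0)" if i: "i < ?n" and j: "j < ?n" for i j
  proof (cases "i < N"; cases "j < N")
    assume "i < N" "j < N" thus ?thesis using hOt unfolding tt_def md_def by simp
  next
    assume a: "i < N" "\<not> j < N" thus ?thesis using crossO[of i "j - N"] j unfolding tt_def by auto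
  next
    assume a: "\<not> i < N" "j < N"
    have "hform Oc (tt i) (tt j) = cnj (hform Oc (tt j) (tt i))" by (rule hform_herm[OF Oc_carrier Oc_herm ttc[OF i] ttc[OF j]])
    thus ?thesis using crossO[of j "i - N"] a i unfolding tt_def by auto
  next
    assume a: "\<not> i < N" "\<not> j < N"
    have "(i - N = j - N) = (i = j)" using a by auto
    thus ?thesis using ggO[of "i - N" "j - N"] a i j unfolding tt_def md_def by auto
  qed
  have T: "T \<in> carrier_mat ?n ?n" unfolding T_def by simp
  have colT: "col T j = tt j" if j: "j < ?n" for j
    using ttc[OF j] j unfolding T_def by (auto simp: col_def)
  have TRT: "adj T * RR * T = SigmaM N"
  proof (rule eq_matI)
    fix i j assume "i < dim_row (SigmaM N)" "j < dim_col (SigmaM N)"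
    hence i: "i < ?n" and j: "j < ?n" by (auto simp: Sigma_diag mat_diag_def)
    show "(adj T * RR * T) $$ (i,j) = SigmaM N $$ (i,j)"
      unfolding hform_entry[OF T R_carrier i j] colT[OF i] colT[OF j] HR[OF i j]
      using i j by (simp add: Sigma_diag mat_diag_def)
  qed (use T in \<open>auto simp: Sigma_diag mat_diag_def\<close>)
  have TOT: "adj T * Oc * T = mat_diag ?n (\<lambda>i. complex_of_real (1 / lam (md N i)))"
  proof (rule eq_matI)
    fix i j assume "i < dim_row (mat_diag ?n (\<lambda>i. complex_of_real (1 / lam (md N i))))"
      "j < dim_col (mat_diag ?n (\<lambda>i. complex_of_real (1 / lam (md N i))))"
    hence i: "i < ?n" and j: "j < ?n" by (auto simp: mat_diag_def)
    show "(adj T * Oc * T) $$ (i,j) = mat_diag ?n (\<lambda>i. complex_of_real (1 / lam (md N i))) $$ (i,j)"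
      unfolding hform_entry[OF T Oc_carrier i j] colT[OF i] colT[OF j] HO[OF i j]
      using i j by (simp add: mat_diag_def)
  qed (use T in \<open>auto simp: mat_diag_def\<close>)
  have TG: "T = GammaM N * cconj T * GammaM N"
  proof -
    have cT: "cconj T \<in> carrier_mat ?n ?n" using T unfolding cconj_def by simp
    have "GammaM N * cconj T * GammaM N = mat ?n ?n (\<lambda>(i,j). cconj T $$ (tau N i, tau N j))"
      by (rule Gamma_conj[OF cT])
    also have "\<dots> = T"
    proof (rule eq_matI)
      fix i j assume "i < dim_row T" "j < dim_col T"
      hence i: "i < ?n" and j: "j < ?n" using T by auto
      have ti: "tau N i < ?n" and tj: "tau N j < ?n" using tau_lt i j by auto
      have "cconj T $$ (tau N i, tau N j) = cnj (tt (tau N j) $ tau N i)"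
        unfolding cconj_def T_def using ti tj by simp
      also have "\<dots> = tt j $ i"
      proof (cases "j < N")
        case True
        hence "tt (tau N j) = gam N (t j)" unfolding tt_def tau_def by simp
        thus ?thesis using True ti tau_tau[OF i] unfolding tt_def by (simp add: gam_index)
      next
        case False
        have jN: "j - N < N" using j False by simp
        hence "tt (tau N j) = t (j - N)" unfolding tt_def tau_def using False by simp
        thus ?thesis using False i unfolding tt_def by (simp add: gam_index)
      qed
      also have "\<dots> = T $$ (i,j)" unfolding T_def using i j by simp
      finally show "mat ?n ?n (\<lambda>(i,j). cconj T $$ (tau N i, tau N j)) $$ (i,j) = T $$ (i,j)" using i j by simp
    qed (use T in auto)
    finally show ?thesis by simp
  qed
  from inv_mat_props[OF R_carrier Rinv]
  have Ri: "inv_mat ?n RR \<in> carrier_mat ?n ?n" and RRi: "RR * inv_mat ?n RR = 1\<^sub>m ?n" by auto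
  have mu: "SigmaM N * adj T * RR * DM N v L Ls M c * T =
        mat_diag ?n (\<lambda>i. complex_of_real (if i < N then 1 / lam i else - (1 / lam (i - N))))"
  proof -
    have "SigmaM N * adj T * RR * DM N v L Ls M c * T = SigmaM N * (adj T * Oc * T)"
      unfolding DM_def by (rule alg_simpl[OF Sigma_carrier T R_carrier Ri Oc_carrier RRi])
    also have "\<dots> = mat_diag ?n (\<lambda>i. complex_of_real (if i < N then 1 / lam i else - (1 / lam (i - N))))"
      unfolding TOT Sigma_diag mat_diag_diag by (rule arg_cong[where f = "mat_diag _"]) (auto simp: md_def)
    finally show ?thesis .
  qed
  show ?thesis unfolding normal_mode_transformation_def Let_def
    apply (rule exI[of _ T])
    apply (intro conjI)
    apply (rule T)
    apply (rule TRT)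
    apply (rule TG)
    apply (rule exI[of _ "\<lambda>k. 1 / lam k"])
    using lp mu by simp
qed

end

end


theorem lemma6:
  fixes N M :: nat and v L Ls :: real and c :: "nat \<Rightarrow> real"
  assumes "N \<ge> 1" and "\<bar>v\<bar> < 1" and "L > 0" and "Ls \<ge> 0" and "M \<ge> 1" and "c 1 = 1"
    and "\<forall>n\<in>{1..N}. (dispF Ls M c (wavenum L n))^2 \<noteq> v^2 * (wavenum L n)^2"
    and "invertible_mat (RM N v L Ls M c)"
  shows "(\<exists>T. normal_mode_transformation N v L Ls M c T) \<longleftrightarrow>
         pos_def_mat (2*N) (OmegaM N v L Ls M c)"
proof
  assume "\<exists>T. normal_mode_transformation N v L Ls M c T"
  then obtain T where "normal_mode_transformation N v L Ls M c T" by blast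
  thus "pos_def_mat (2*N) (OmegaM N v L Ls M c)" by (rule partA[OF assms(1) assms(8)])
next
  assume pd: "pos_def_mat (2*N) (OmegaM N v L Ls M c)"
  have N0: "0 < N" using assms(1) by simp
  have "\<forall>k<N. epsn v L Ls M c (k+1) = 1" using partB1[OF N0 assms(3) pd] by blast
  thus "\<exists>T. normal_mode_transformation N v L Ls M c T"
    by (rule exists_T[OF N0 assms(3) assms(7) assms(8)])
qed

end
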